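(* Let $X$ be a separable real Hilbert space, $A$ the generator of a $C_0$-semigroup $(T(t))_{t\ge0}$ on $X$ with $\|T(t)\|\le Me^{-\nu t}$ ($M\ge1,\nu>0$), $N_1,\dots,N_n\in\mathcal L(X)$, $\psi_1,\dots,\psi_n\in X$, $Bu=\sum_i\psi_iu_i$, $\mathcal H$ a separable Hilbert space, $C\in\mathcal L(X,\mathcal H)$, and assume $M^2\Gamma^2(2\nu)^{-1}<1$ where $\Gamma=(\sum_i\|N_iN_i^*\|)^{1/2}$. Let $V_1\subset V_2\subset\dots\subset X$ be closed subspaces with $\overline{\bigcup_iV_i}=X$ such that each $V_i$ is invariant under $T(t)$ for all $t\ge0$ and under each $N_j$. Let $P_{V_i}$ be the orthogonal projection onto $V_i$, let $$R_{V_i}((f_k)_{k\ge0})=\sum_{k\ge0}\int_{(0,\infty)^{k+1}}P_k(s)^*(P_{V_i}B\otimes\mathrm{id}_{(\mathbb R^n)^{\otimes k}})f_k(s)\,ds,$$ and let $H_{V_i}:=WR_{V_i}$ be the Hankel operator of the system restricted to $V_i$. If the observability map $W$ is a Hilbert–Schmidt operator, then $H_{V_i}\to H$ in trace (nuclear) norm as $i\to\infty$. If $W$ is only assumed bounded, then $H_{V_i}\to H$ in Hilbert–Schmidt norm.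
   Context: $\widehat e_1,\dots,\widehat e_n$ is the standard basis of $\mathbb R^n$. For $t\in(0,\infty)^{k+1}$: $O_0(t_1)=CT(t_1)$, $P_0(t_1)=T(t_1)^*$, and for $k\ge1$, $O_k(t)y=\sum_{n_1,\dots,n_k}CT(t_1)N_{n_1}T(t_2)\cdots N_{n_k}T(t_{k+1})y\otimes(\widehat e_{n_1}\otimes\dots\otimes\widehat e_{n_k})$, $P_k(t)y=\sum_{n_1,\dots,n_k}T(t_1)^*N_{n_1}^*\cdots T(t_k)^*N_{n_k}^*T(t_{k+1})^*y\otimes(\widehat e_{n_1}\otimes\dots\otimes\widehat e_{n_k})$. For a Hilbert space $K$, $F^n_k(K)=L^2((0,\infty)^k,K\otimes(\mathbb R^n)^{\otimes(k-1)})$ and $F^n(K)=\bigoplus_{k\ge1}F^n_k(K)$. Observability map $W:X\to F^n(\mathcal H)$, $Wx=(O_k(\cdot)x)_{k\ge0}$ with $O_k(\cdot)x\in F^n_{k+1}(\mathcal H)$. Reachability map $R:F^n(\mathbb R^n)\to X$, $R((f_k)_{k\ge0})=\sum_k\int_{(0,\infty)^{k+1}}P_k(s)^*(B\otimes\mathrm{id})f_k(s)\,ds$, $f_k\in F^n_{k+1}(\mathbb R^n)$. Hankel operator $H=WR$. *)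

theory Defs
  imports "HOL-Analysis.Analysis"
begin

definition adj :: "('a::real_inner \<Rightarrow> 'b::real_inner) \<Rightarrow> 'b \<Rightarrow> 'a" where
  "adj f y = (THE z. \<forall>x. inner (f x) y = inner x z)"

definition orth_proj :: "'a::real_inner set \<Rightarrow> 'a \<Rightarrow> 'a" where
  "orth_proj V x = (THE y. y \<in> V \<and> (\<forall>v\<in>V. inner (x - y) v = 0))"

definition orthonormal_set :: "'a::real_inner set \<Rightarrow> bool" where
  "orthonormal_set E \<longleftrightarrow> (\<forall>e\<in>E. norm e = 1) \<and> (\<forall>e\<in>E. \<forall>e'\<in>E. e \<noteq> e' \<longrightarrow> inner e e' = 0)"

text \<open>An element f of F^n(K) is represented by its components: f k s idx is the
 K-coordinate of the k-th component (k \<ge> 0) at times s = (s 0, ..., s k) in (0,\<infinity>)^(k+1),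
 in direction e_(idx 0) \<otimes> ... \<otimes> e_(idx (d k - 1)) of the tensor factor (R^n)^\<otimes>(d k).
 Indices are 0-based: idx i \<in> {..<n}.\<close>

definition posM :: "nat \<Rightarrow> (nat \<Rightarrow> real) measure" where
  "posM k = PiM {..k} (\<lambda>_. restrict_space lborel {0<..})"

definition idxs :: "nat \<Rightarrow> nat \<Rightarrow> (nat \<Rightarrow> nat) set" where
  "idxs d n = PiE {..<d} (\<lambda>_. {..<n})"

type_synonym 'k fock = "nat \<Rightarrow> (nat \<Rightarrow> real) \<Rightarrow> (nat \<Rightarrow> nat) \<Rightarrow> 'k"

definition fock_norm2 :: "nat \<Rightarrow> (nat \<Rightarrow> nat) \<Rightarrow> 'k::real_normed_vector fock \<Rightarrow> ennreal" where
  "fock_norm2 n d f = (\<Sum>k. \<Sum>idx\<in>idxs (d k) n. \<integral>\<^sup>+ s. ennreal ((norm (f k s idx))\<^sup>2) \<partial>posM k)"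

definition fock_space :: "nat \<Rightarrow> (nat \<Rightarrow> nat) \<Rightarrow> 'k::real_normed_vector fock set" where
  "fock_space n d = {f. (\<forall>k. \<forall>idx\<in>idxs (d k) n. (\<lambda>s. f k s idx) \<in> borel_measurable (posM k))
                       \<and> fock_norm2 n d f < \<infinity>}"

definition fock_norm :: "nat \<Rightarrow> (nat \<Rightarrow> nat) \<Rightarrow> 'k::real_normed_vector fock \<Rightarrow> real" where
  "fock_norm n d f = sqrt (enn2real (fock_norm2 n d f))"

definition fock_inner :: "nat \<Rightarrow> (nat \<Rightarrow> nat) \<Rightarrow> 'k::real_inner fock \<Rightarrow> 'k fock \<Rightarrow> real" where
  "fock_inner n d f g = (\<Sum>k. \<Sum>idx\<in>idxs (d k) n. \<integral> s. inner (f k s idx) (g k s idx) \<partial>posM k)"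

definition fock_orthonormal :: "nat \<Rightarrow> (nat \<Rightarrow> nat) \<Rightarrow> 'k::real_inner fock set \<Rightarrow> bool" where
  "fock_orthonormal n d E \<longleftrightarrow> E \<subseteq> fock_space n d \<and> (\<forall>e\<in>E. fock_inner n d e e = 1)
     \<and> (\<forall>e\<in>E. \<forall>e'\<in>E. e \<noteq> e' \<longrightarrow> fock_inner n d e e' = 0)"

text \<open>Squared Hilbert--Schmidt norm of an operator F^n(K1) \<rightarrow> F^n(K2):
  sum of squared norms of the images of an orthonormal basis, written as the supremum over
  orthonormal families (which is attained at any orthonormal basis).\<close>
definition hs_norm2 :: "nat \<Rightarrow> (nat \<Rightarrow> nat) \<Rightarrow> (nat \<Rightarrow> nat) \<Rightarrow>
    ('k1::real_inner fock \<Rightarrow> 'k2::real_inner fock) \<Rightarrow> ennreal" where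
  "hs_norm2 n d1 d2 L = (SUP E\<in>{E. fock_orthonormal n d1 E}.
       (\<Sum>\<^sub>\<infinity>e\<in>E. ennreal ((fock_norm n d2 (L e))\<^sup>2)))"

definition nuclear_norm :: "nat \<Rightarrow> (nat \<Rightarrow> nat) \<Rightarrow> (nat \<Rightarrow> nat) \<Rightarrow>
    ('k1::real_inner fock \<Rightarrow> 'k2::real_inner fock) \<Rightarrow> ennreal" where
  "nuclear_norm n d1 d2 L = Inf {(\<Sum>i. ennreal (fock_norm n d1 (a i) * fock_norm n d2 (b i))) | a b.
      (\<forall>i. a i \<in> fock_space n d1 \<and> b i \<in> fock_space n d2) \<and>
      (\<forall>z\<in>fock_space n d1. (\<lambda>m. fock_norm n d2
          (\<lambda>k s idx. L z k s idx - (\<Sum>i<m. fock_inner n d1 z (a i) *\<^sub>R b i k s idx))) \<longlonglongrightarrow> 0)}"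

fun obs_chain :: "(real \<Rightarrow> 'x \<Rightarrow> 'x) \<Rightarrow> (nat \<Rightarrow> 'x \<Rightarrow> 'x) \<Rightarrow> nat \<Rightarrow> (nat \<Rightarrow> real) \<Rightarrow> (nat \<Rightarrow> nat) \<Rightarrow> 'x \<Rightarrow> 'x" where
  "obs_chain T N 0 s idx = T (s 0)"
| "obs_chain T N (Suc k) s idx = obs_chain T N k s idx \<circ> N (idx k) \<circ> T (s (Suc k))"

text \<open>reach_chain k s idx = T(s k) N(idx (k-1)) ... N(idx 0) T(s 0); this is P_k(s)^* applied
  to the tensor z \<otimes> e_(idx 0) \<otimes> ... \<otimes> e_(idx (k-1)).\<close>
fun reach_chain :: "(real \<Rightarrow> 'x \<Rightarrow> 'x) \<Rightarrow> (nat \<Rightarrow> 'x \<Rightarrow> 'x) \<Rightarrow> nat \<Rightarrow> (nat \<Rightarrow> real) \<Rightarrow> (nat \<Rightarrow> nat) \<Rightarrow> 'x \<Rightarrow> 'x" where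
  "reach_chain T N 0 s idx = T (s 0)"
| "reach_chain T N (Suc k) s idx = T (s (Suc k)) \<circ> N (idx k) \<circ> reach_chain T N k s idx"

text \<open>Observability map W : X \<rightarrow> F^n(H) (component k has k tensor indices).\<close>
definition obsW :: "(real \<Rightarrow> 'x \<Rightarrow> 'x) \<Rightarrow> (nat \<Rightarrow> 'x \<Rightarrow> 'x) \<Rightarrow> ('x \<Rightarrow> 'h) \<Rightarrow> 'x \<Rightarrow> 'h fock" where
  "obsW T N C x = (\<lambda>k s idx. C (obs_chain T N k s idx x))"

text \<open>Reachability map with input operator (P B) u = \<Sum>_j u_j P \<psi>_j, on F^n(R^n):
  an input f has k+1 tensor indices in component k, idx 0 being the R^n input coordinate.\<close>
definition reachR :: "nat \<Rightarrow> (real \<Rightarrow> 'x::{real_normed_vector,second_countable_topology,banach} \<Rightarrow> 'x) \<Rightarrow> (nat \<Rightarrow> 'x \<Rightarrow> 'x)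
     \<Rightarrow> (nat \<Rightarrow> 'x) \<Rightarrow> ('x \<Rightarrow> 'x) \<Rightarrow> real fock \<Rightarrow> 'x" where
  "reachR n T N \<psi> P f = (\<Sum>k. \<integral> s. (\<Sum>idx\<in>idxs (Suc k) n.
        f k s idx *\<^sub>R reach_chain T N k s (\<lambda>i. idx (Suc i)) (P (\<psi> (idx 0)))) \<partial>posM k)"

end

theory Submission
  imports Defs
begin

lemma parallelogram_law:
  fixes a b :: "'a::real_inner"
  shows "norm (a + b)^2 + norm (a - b)^2 = 2 * norm a ^2 + 2 * norm b ^2"
  by (simp add: power2_norm_eq_inner inner_add_left inner_add_right inner_diff_left inner_diff_right inner_commute)

lemma proj_exists:
  fixes V :: "'a::{real_inner,complete_space} set" and x :: 'a
  assumes sV: "subspace V" and cV: "closed V"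
  shows "\<exists>y\<in>V. \<forall>v\<in>V. inner (x - y) v = 0"
proof -
  define D where "D = (\<lambda>v. norm (x - v)) ` V"
  define d where "d = Inf D"
  have "0 \<in> V" using sV by (simp add: subspace_0)
  have Dne: "D \<noteq> {}" using \<open>0\<in>V\<close> by (auto simp: D_def)
  have bdd: "bdd_below D" unfolding D_def by (rule bdd_belowI[of _ 0]) auto
  have d_le: "d \<le> norm (x - v)" if "v \<in> V" for v
    unfolding d_def by (rule cInf_lower) (use bdd that in \<open>auto simp: D_def\<close>)
  have d0: "0 \<le> d" unfolding d_def using Dne by (intro cInf_greatest) (auto simp: D_def)
  have "\<forall>m. \<exists>v\<in>V. norm (x - v) < d + 1/(Suc m)"
  proof
    fix m :: nat
    have "Inf D < d + 1/Suc m" by (simp add: d_def)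
    then obtain t where "t\<in>D" "t < d + 1/Suc m" using cInf_lessD[OF Dne] by blast
    then show "\<exists>v\<in>V. norm (x - v) < d + 1/(Suc m)" by (auto simp: D_def)
  qed
  then obtain v where vV: "\<And>m. v m \<in> V" and vlt: "\<And>m. norm (x - v m) < d + 1/Suc m" by metis
  have sq: "norm (x - v m)^2 \<le> d^2 + (2*d+1) * (1/Suc m)" for m
  proof -
    have e1: "1/Suc m \<le> (1::real)" "0 \<le> 1/real (Suc m)" by auto
    have "norm (x - v m)^2 \<le> (d + 1/Suc m)^2"
      using vlt[of m] by (intro power_mono) auto
    also have "\<dots> = d^2 + 2*d*(1/Suc m) + (1/Suc m)*(1/Suc m)" by (simp add: power2_eq_square algebra_simps)
    also have "\<dots> \<le> d^2 + 2*d*(1/Suc m) + 1*(1/Suc m)"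
      using e1 by (intro add_left_mono mult_right_mono) auto
    finally show ?thesis by (simp add: algebra_simps)
  qed
  have key: "norm (v m - v l)^2 \<le> 2*(2*d+1)*(1/Suc m + 1/Suc l)" for m l
  proof -
    let ?a = "x - v m" and ?b = "x - v l"
    have "(1/2) *\<^sub>R (v m + v l) \<in> V" using vV sV by (simp add: subspace_add subspace_mul)
    hence dd: "d \<le> norm (x - (1/2) *\<^sub>R (v m + v l))" by (rule d_le)
    have "?a + ?b = 2 *\<^sub>R (x - (1/2) *\<^sub>R (v m + v l))" by (simp add: algebra_simps scaleR_2)
    hence "norm (?a + ?b) = 2 * norm (x - (1/2) *\<^sub>R (v m + v l))" by simp
    hence h1: "4 * d^2 \<le> norm (?a+?b)^2" using dd d0
      by (simp add: power2_eq_square mult_mono)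
    have "norm (v m - v l) = norm (?a - ?b)" by (simp add: norm_minus_commute)
    hence "norm (v m - v l)^2 = 2 * norm ?a ^2 + 2 * norm ?b ^2 - norm (?a + ?b)^2"
      using parallelogram_law[of ?a ?b] by simp
    also have "\<dots> \<le> 2 * (d^2 + (2*d+1) * (1/Suc m)) + 2 * (d^2 + (2*d+1) * (1/Suc l)) - 4 * d^2"
      using sq[of m] sq[of l] h1 by (smt (verit))
    finally show ?thesis by (simp add: algebra_simps)
  qed
  have "Cauchy v"
  proof (rule metric_CauchyI)
    fix e :: real assume e: "0 < e"
    obtain N :: nat where N: "4*(2*d+1)/e^2 < N" using reals_Archimedean2 by blast
    show "\<exists>M. \<forall>m\<ge>M. \<forall>n\<ge>M. dist (v m) (v n) < e"
    proof (intro exI allI impI)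
      fix m l assume m: "N \<le> m" and l: "N \<le> l"
      have "1/real (Suc m) \<le> 1/Suc N" "1/real (Suc l) \<le> 1/Suc N" using m l
        by (auto intro!: divide_left_mono)
      hence "norm (v m - v l)^2 \<le> 2*(2*d+1)*(2/Suc N)"
      proof -
        have "1/real (Suc m) + 1/Suc l \<le> 2/Suc N" using \<open>1/real (Suc m) \<le> 1/Suc N\<close> \<open>1/real (Suc l) \<le> 1/Suc N\<close> by simp
        hence "2*(2*d+1)*(1/real (Suc m) + 1/Suc l) \<le> 2*(2*d+1)*(2/Suc N)" using d0 by (intro mult_left_mono) auto
        thus ?thesis using key[of m l] by linarith
      qed
      also have "\<dots> = 4*(2*d+1)/Suc N" by simp
      also have "\<dots> < e^2"
      proof -
        have "4*(2*d+1) < e^2 * N" using N e by (simp add: field_simps)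
        also have "\<dots> \<le> e^2 * Suc N" using e by simp
        finally show ?thesis by (simp add: field_simps)
      qed
      finally have "norm (v m - v l)^2 < e^2" .
      hence "norm (v m - v l) < e" using e by (simp add: power_less_imp_less_base)
      thus "dist (v m) (v l) < e" by (simp add: dist_norm)
    qed
  qed
  then obtain y where vy: "v \<longlonglongrightarrow> y" using Cauchy_convergent_iff convergent_def by blast
  have yV: "y \<in> V" using closed_sequentially[OF cV vV vy] .
  have "norm (x - y) \<le> d"
  proof (rule LIMSEQ_le[of "\<lambda>m. norm (x - v m)" _ "\<lambda>m. d + 1/Suc m"])
    show "(\<lambda>m. norm (x - v m)) \<longlonglongrightarrow> norm (x - y)" by (intro tendsto_intros vy)
    show "(\<lambda>m. d + 1 / real (Suc m)) \<longlonglongrightarrow> d"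
      using tendsto_add[OF tendsto_const LIMSEQ_inverse_real_of_nat] by (simp add: inverse_eq_divide)
    show "\<exists>N. \<forall>n\<ge>N. norm (x - v n) \<le> d + 1 / real (Suc n)" using vlt less_imp_le by blast
  qed
  hence ymin: "norm (x - y) \<le> norm (x - w)" if "w \<in> V" for w using d_le[OF that] by linarith
  have "\<forall>w\<in>V. inner (x - y) w = 0"
  proof
    fix w assume wV: "w \<in> V"
    show "inner (x - y) w = 0"
    proof (cases "w = 0")
      case False
      define c where "c = inner (x - y) w"
      define t where "t = c / inner w w"
      have ww: "inner w w > 0" using False by simp
      have "y + t *\<^sub>R w \<in> V" using yV wV sV by (simp add: subspace_add subspace_mul)
      hence "norm (x - y)^2 \<le> norm (x - (y + t *\<^sub>R w))^2"
        using ymin by (simp add: power_mono)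
      also have "\<dots> = norm ((x - y) - t *\<^sub>R w)^2" by (simp add: algebra_simps)
      also have "\<dots> = norm (x - y)^2 - 2*t*c + t^2 * inner w w"
        unfolding power2_norm_eq_inner
        by (simp add: inner_diff_left inner_diff_right inner_commute c_def power2_eq_square algebra_simps)
      also have "\<dots> = norm (x - y)^2 - c^2 / inner w w"
        using ww by (simp add: t_def power2_eq_square field_simps)
      finally have "c^2 / inner w w \<le> 0" by simp
      hence "c^2 \<le> 0" using ww by (simp add: divide_le_0_iff)
      thus ?thesis unfolding c_def by simp
    qed simp
  qed
  thus ?thesis using yV by blast
qed

lemma orth_proj:
  fixes V :: "'a::{real_inner,complete_space} set"
  assumes "subspace V" "closed V"
  shows "orth_proj V x \<in> V" "\<And>v. v \<in> V \<Longrightarrow> inner (x - orth_proj V x) v = 0"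
proof -
  have ex: "\<exists>!y. y \<in> V \<and> (\<forall>v\<in>V. inner (x - y) v = 0)"
  proof -
    obtain y where y: "y \<in> V" "\<forall>v\<in>V. inner (x - y) v = 0" using proj_exists[OF assms] by blast
    moreover have "y' = y" if "y' \<in> V" "\<forall>v\<in>V. inner (x - y') v = 0" for y'
    proof -
      have d: "y - y' \<in> V" using y that assms(1) by (simp add: subspace_diff)
      have "inner (x - y') (y - y') - inner (x - y) (y - y') = 0" using y that d by simp
      hence "inner (y - y') (y - y') = 0" by (simp add: inner_diff_left inner_diff_right algebra_simps)
      thus ?thesis by simp
    qed
    ultimately show ?thesis by blast
  qed
  show "orth_proj V x \<in> V" unfolding orth_proj_def using theI'[OF ex] by blast
  show "\<And>v. v \<in> V \<Longrightarrow> inner (x - orth_proj V x) v = 0" unfolding orth_proj_def using theI'[OF ex] by blast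
qed

lemma orth_proj_le:
  fixes V :: "'a::{real_inner,complete_space} set"
  assumes "subspace V" "closed V" "v \<in> V"
  shows "norm (x - orth_proj V x) \<le> norm (x - v)"
proof -
  let ?p = "orth_proj V x"
  have "?p - v \<in> V" using orth_proj[OF assms(1,2)] assms by (simp add: subspace_diff)
  hence o: "inner (x - ?p) (?p - v) = 0" using orth_proj(2)[OF assms(1,2)] by blast
  have "norm ((x - ?p) + (?p - v))^2 = norm (x - ?p)^2 + norm (?p - v)^2"
    unfolding power2_norm_eq_inner inner_add_left inner_add_right using o by (simp add: inner_commute)
  hence "norm (x - v)^2 = norm (x - ?p)^2 + norm (?p - v)^2" by simp
  hence "norm (x - ?p)^2 \<le> norm (x - v)^2" by simp
  thus ?thesis by (simp add: power2_le_iff_abs_le)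
qed

lemma orth_proj_tendsto:
  fixes V :: "nat \<Rightarrow> 'a::{real_inner,complete_space} set"
  assumes V_sub: "\<forall>i. subspace (V i) \<and> closed (V i)"
    and V_mono: "\<forall>i. V i \<subseteq> V (Suc i)"
    and V_dense: "closure (\<Union>i. V i) = UNIV"
  shows "(\<lambda>i. orth_proj (V i) x) \<longlonglongrightarrow> x"
proof (rule LIMSEQ_I)
  fix r :: real assume r: "0 < r"
  have "x \<in> closure (\<Union>i. V i)" using V_dense by simp
  then obtain w where w: "w \<in> (\<Union>i. V i)" "dist w x < r" using closure_approachable r by blast
  then obtain j where j: "w \<in> V j" by blast
  have mono: "V j \<subseteq> V i" if "j \<le> i" for i using lift_Suc_mono_le[of V, OF _ that] V_mono by blast
  show "\<exists>no. \<forall>n\<ge>no. norm (orth_proj (V n) x - x) < r"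
  proof (intro exI allI impI)
    fix i assume "j \<le> i"
    hence "w \<in> V i" using mono j by blast
    hence "norm (x - orth_proj (V i) x) \<le> norm (x - w)" using orth_proj_le V_sub by blast
    thus "norm (orth_proj (V i) x - x) < r" using w(2) by (simp add: dist_norm norm_minus_commute)
  qed
qed

lemma riesz:
  fixes f :: "'a::{real_inner,complete_space} \<Rightarrow> real"
  assumes bl: "bounded_linear f"
  shows "\<exists>z. \<forall>x. f x = inner x z"
proof (cases "\<forall>x. f x = 0")
  case True thus ?thesis by (intro exI[of _ 0]) simp
next
  case False
  interpret f: bounded_linear f by fact
  obtain x0 where x0: "f x0 \<noteq> 0" using False by blast
  define K where "K = {x. f x = 0}"
  have sK: "subspace K" unfolding K_def subspace_def by (simp add: f.add f.scaleR f.zero)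
  have cK: "closed K" unfolding K_def by (intro closed_Collect_eq continuous_intros f.continuous_on continuous_on_const) 
  define x1 where "x1 = x0 /\<^sub>R f x0"
  have fx1: "f x1 = 1" using x0 by (simp add: x1_def f.scaleR)
  define w where "w = x1 - orth_proj K x1"
  have pK: "orth_proj K x1 \<in> K" using orth_proj[OF sK cK] by blast
  have fw: "f w = 1" using pK fx1 by (simp add: w_def f.diff K_def)
  have wK: "inner w k = 0" if "k \<in> K" for k using orth_proj(2)[OF sK cK that] by (simp add: w_def)
  have w0: "inner w w \<noteq> 0" using fw by (auto simp: f.zero)
  show ?thesis
  proof (intro exI allI)
    fix x
    have "x - f x *\<^sub>R w \<in> K" by (simp add: K_def f.diff f.scaleR fw)
    hence "inner w (x - f x *\<^sub>R w) = 0" by (rule wK)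
    hence "inner x w = f x * inner w w" by (simp add: inner_diff_right inner_commute)
    thus "f x = inner x (w /\<^sub>R inner w w)" using w0 by simp
  qed
qed

lemma adj_char:
  fixes f :: "'a::{real_inner,complete_space} \<Rightarrow> 'b::real_inner"
  assumes "bounded_linear f"
  shows "inner (f x) y = inner x (adj f y)"
proof -
  have bl: "bounded_linear (\<lambda>x. inner (f x) y)"
    using bounded_linear_compose[OF bounded_linear_inner_left assms] by (simp add: o_def)
  obtain z where z: "\<forall>x. inner (f x) y = inner x z" using riesz[OF bl] by blast
  have ex: "\<exists>!z. \<forall>x. inner (f x) y = inner x z"
  proof (rule ex1I[of _ z])
    show "\<forall>x. inner (f x) y = inner x z" by fact
    fix z' assume "\<forall>x. inner (f x) y = inner x z'"
    hence "inner (z' - z) (z' - z) = 0" using z by (simp add: inner_diff_right inner_diff_left)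
    thus "z' = z" by simp
  qed
  show ?thesis unfolding adj_def using theI'[OF ex] by blast
qed

lemma adj_bounded_linear:
  fixes f :: "'a::{real_inner,complete_space} \<Rightarrow> 'b::real_inner"
  assumes bl: "bounded_linear f"
  shows "bounded_linear (adj f)"
proof -
  have uniq: "a = b" if "\<And>x. inner x a = inner x b" for a b :: 'a
  proof -
    have "inner (a - b) (a - b) = 0" using that by (simp add: inner_diff_right inner_diff_left)
    thus ?thesis by simp
  qed
  show ?thesis
  proof (rule bounded_linear_intro[where K = "onorm f"])
    fix a b
    show "adj f (a + b) = adj f a + adj f b"
      by (rule uniq) (simp add: inner_add_right adj_char[OF bl, symmetric])
  next
    fix r a
    show "adj f (r *\<^sub>R a) = r *\<^sub>R adj f a"
      by (rule uniq) (simp add: adj_char[OF bl, symmetric])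
  next
    fix y
    have "norm (adj f y)^2 = inner (f (adj f y)) y" by (simp add: adj_char[OF bl] power2_norm_eq_inner)
    also have "\<dots> \<le> norm (f (adj f y)) * norm y" by (rule norm_cauchy_schwarz)
    also have "\<dots> \<le> onorm f * norm (adj f y) * norm y"
      by (intro mult_right_mono onorm[OF bl]) auto
    finally have h: "norm (adj f y) * norm (adj f y) \<le> (norm y * onorm f) * norm (adj f y)"
      by (simp add: power2_eq_square algebra_simps)
    show "norm (adj f y) \<le> norm y * onorm f"
    proof (cases "adj f y = 0")
      case True thus ?thesis using onorm_pos_le[OF bl] by simp
    next
      case False thus ?thesis using h by simp
    qed
  qed
qed

lemma onorm_sq_le_adj:
  fixes N :: "'a::{real_inner,complete_space} \<Rightarrow> 'a"
  assumes bl: "bounded_linear N"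
  shows "onorm N ^ 2 \<le> onorm (N \<circ> adj N)"
proof -
  let ?A = "adj N"
  have blA: "bounded_linear ?A" by (rule adj_bounded_linear[OF bl])
  have blNA: "bounded_linear (N \<circ> ?A)" using bounded_linear_compose[OF bl blA] by (simp add: o_def)
  define s where "s = sqrt (onorm (N \<circ> ?A))"
  have s0: "0 \<le> s" by (simp add: s_def onorm_pos_le[OF blNA])
  have ss: "s^2 = onorm (N \<circ> ?A)" by (simp add: s_def onorm_pos_le[OF blNA])
  have Ay: "norm (?A y) \<le> s * norm y" for y
  proof -
    have "norm (?A y)^2 = inner (N (?A y)) y" by (simp add: adj_char[OF bl] power2_norm_eq_inner)
    also have "\<dots> \<le> norm ((N \<circ> ?A) y) * norm y" using norm_cauchy_schwarz by simp
    also have "\<dots> \<le> onorm (N \<circ> ?A) * norm y * norm y"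
      by (intro mult_right_mono onorm[OF blNA]) auto
    also have "\<dots> = (s * norm y)^2" by (simp add: ss[symmetric] power2_eq_square)
    finally show ?thesis using s0 by (simp add: power2_le_iff_abs_le)
  qed
  have Nx: "norm (N x) \<le> s * norm x" for x
  proof -
    have "norm (N x)^2 = inner x (?A (N x))" by (simp add: adj_char[OF bl, symmetric] power2_norm_eq_inner)
    also have "\<dots> \<le> norm x * norm (?A (N x))" by (rule norm_cauchy_schwarz)
    also have "\<dots> \<le> norm x * (s * norm (N x))" by (intro mult_left_mono Ay) auto
    finally have h: "norm (N x) * norm (N x) \<le> (s * norm x) * norm (N x)" by (simp add: power2_eq_square algebra_simps)
    show ?thesis
    proof (cases "N x = 0")
      case True thus ?thesis using s0 by simp
    next
      case False thus ?thesis using h by simp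
    qed
  qed
  have "onorm N \<le> s" by (rule onorm_bound[OF s0 Nx])
  hence "onorm N ^2 \<le> s^2" using onorm_pos_le[OF bl] by (simp add: power_mono)
  thus ?thesis using ss by simp
qed


definition onz :: "(nat \<Rightarrow> 'a::real_inner) \<Rightarrow> nat \<Rightarrow> bool" where
  "onz u M \<longleftrightarrow> (\<forall>i<M. \<forall>j<M. inner (u i) (u j) = (if i = j \<and> u i \<noteq> 0 then 1 else 0))"

lemma onz_self: "onz u M \<Longrightarrow> i < M \<Longrightarrow> inner x (u i) * inner (u i) (u i) = inner x (u i)"
  unfolding onz_def by (cases "u i = 0") auto

lemma onz_sum_inner:
  assumes "onz u M" "i < M"
  shows "inner (\<Sum>j<M. c j *\<^sub>R u j) (u i) = c i * inner (u i) (u i)"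
proof -
  have "inner (\<Sum>j<M. c j *\<^sub>R u j) (u i) = (\<Sum>j<M. c j * inner (u j) (u i))"
    by (simp add: inner_sum_left)
  also have "\<dots> = (\<Sum>j\<in>{i}. c j * inner (u j) (u i))"
    using assms by (intro sum.mono_neutral_right) (auto simp: onz_def)
  finally show ?thesis by simp
qed

lemma onz_resid_orth:
  assumes "onz u M" "i < M"
  shows "inner (x - (\<Sum>j<M. inner x (u j) *\<^sub>R u j)) (u i) = 0"
  using onz_sum_inner[OF assms, of "\<lambda>j. inner x (u j)"] onz_self[OF assms, of x]
  by (simp add: inner_diff_left)

lemma onz_resid_orth_sum:
  assumes "onz u M"
  shows "inner (x - (\<Sum>j<M. inner x (u j) *\<^sub>R u j)) (\<Sum>j<M. c j *\<^sub>R u j) = 0"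
  using onz_resid_orth[OF assms] by (simp add: inner_sum_right)

lemma onz_best:
  assumes "onz u M"
  shows "norm (x - (\<Sum>j<M. inner x (u j) *\<^sub>R u j)) \<le> norm (x - (\<Sum>j<M. c j *\<^sub>R u j))"
proof -
  let ?Q = "\<Sum>j<M. inner x (u j) *\<^sub>R u j" and ?v = "\<Sum>j<M. c j *\<^sub>R u j"
  have "?Q - ?v = (\<Sum>j<M. (inner x (u j) - c j) *\<^sub>R u j)" by (simp add: sum_subtractf scaleR_diff_left)
  hence o: "inner (x - ?Q) (?Q - ?v) = 0" using onz_resid_orth_sum[OF assms] by simp
  have "norm ((x - ?Q) + (?Q - ?v))^2 = norm (x - ?Q)^2 + norm (?Q - ?v)^2"
    unfolding power2_norm_eq_inner inner_add_left inner_add_right using o by (simp add: inner_commute)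
  hence "norm (x - ?v)^2 = norm (x - ?Q)^2 + norm (?Q - ?v)^2" by simp
  hence "norm (x - ?Q)^2 \<le> norm (x - ?v)^2" by simp
  thus ?thesis by (simp add: power2_le_iff_abs_le)
qed

lemma onz_pythag:
  assumes "onz u M"
  shows "norm x ^2 = norm (x - (\<Sum>j<M. inner x (u j) *\<^sub>R u j))^2 + (\<Sum>j<M. (inner x (u j))^2)"
proof -
  let ?Q = "\<Sum>j<M. inner x (u j) *\<^sub>R u j"
  have o: "inner (x - ?Q) ?Q = 0" using onz_resid_orth_sum[OF assms] .
  have qq: "inner ?Q ?Q = (\<Sum>j<M. (inner x (u j))^2)"
  proof -
    have "inner ?Q ?Q = (\<Sum>i<M. inner x (u i) * inner (u i) ?Q)" by (simp only: inner_sum_left inner_scaleR_left)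
    also have "\<dots> = (\<Sum>i<M. (inner x (u i))^2)"
    proof (intro sum.cong refl)
      fix i assume "i \<in> {..<M}"
      hence i: "i < M" by simp
      have "inner (u i) ?Q = inner x (u i) * inner (u i) (u i)"
        using onz_sum_inner[OF assms i, of "\<lambda>j. inner x (u j)"] by (simp add: inner_commute)
      thus "inner x (u i) * inner (u i) ?Q = (inner x (u i))^2"
        using onz_self[OF assms i, of x] by (simp add: power2_eq_square)
    qed
    finally show ?thesis .
  qed
  have "norm ((x - ?Q) + ?Q)^2 = norm (x - ?Q)^2 + inner ?Q ?Q"
    unfolding power2_norm_eq_inner inner_add_left inner_add_right using o by (simp add: inner_commute)
  thus ?thesis using qq by simp
qed

definition gs_step :: "(nat \<Rightarrow> 'a::real_inner) \<Rightarrow> nat \<Rightarrow> 'a \<Rightarrow> 'a" where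
  "gs_step u m d = (let w = d - (\<Sum>j<m. inner d (u j) *\<^sub>R u j) in if w = 0 then 0 else w /\<^sub>R norm w)"

primrec gsU :: "(nat \<Rightarrow> 'a::real_inner) \<Rightarrow> nat \<Rightarrow> nat \<Rightarrow> 'a" where
  "gsU d 0 = (\<lambda>_. 0)"
| "gsU d (Suc m) = (gsU d m)(m := gs_step (gsU d m) m (d m))"

definition gs :: "(nat \<Rightarrow> 'a::real_inner) \<Rightarrow> nat \<Rightarrow> 'a" where
  "gs d m = gsU d (Suc m) m"

lemma gsU_gs: "j < M \<Longrightarrow> gsU d M j = gs d j"
proof (induction M)
  case 0 thus ?case by simp
next
  case (Suc M)
  show ?case
  proof (cases "j = M")
    case True thus ?thesis by (simp add: gs_def)
  next
    case False thus ?thesis using Suc by simp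
  qed
qed

lemma gs_eq: "gs d m = (let w = d m - (\<Sum>j<m. inner (d m) (gs d j) *\<^sub>R gs d j) in if w = 0 then 0 else w /\<^sub>R norm w)"
proof -
  have "gs d m = gs_step (gsU d m) m (d m)" by (simp add: gs_def)
  also have "(\<Sum>j<m. inner (d m) (gsU d m j) *\<^sub>R gsU d m j) = (\<Sum>j<m. inner (d m) (gs d j) *\<^sub>R gs d j)"
    by (intro sum.cong) (auto simp: gsU_gs)
  hence "gs_step (gsU d m) m (d m) = (let w = d m - (\<Sum>j<m. inner (d m) (gs d j) *\<^sub>R gs d j) in if w = 0 then 0 else w /\<^sub>R norm w)"
    by (simp add: gs_step_def)
  finally show ?thesis .
qed

lemma gs_onz: "onz (gs d) M"
proof (induction M)
  case 0 thus ?case by (simp add: onz_def)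
next
  case (Suc m)
  let ?u = "gs d"
  define w where "w = d m - (\<Sum>j<m. inner (d m) (?u j) *\<^sub>R ?u j)"
  have um: "?u m = (if w = 0 then 0 else w /\<^sub>R norm w)" by (simp add: gs_eq[of d m] w_def Let_def)
  have wo: "inner w (?u i) = 0" if "i < m" for i
    unfolding w_def by (rule onz_resid_orth[OF Suc that])
  have umo: "inner (?u m) (?u i) = 0" if "i < m" for i using wo[OF that] um by auto
  have umm: "inner (?u m) (?u m) = (if ?u m \<noteq> 0 then 1 else 0)"
  proof (cases "w = 0")
    case True thus ?thesis using um by simp
  next
    case False
    hence "inner (?u m) (?u m) = 1" using um by (simp add: power2_norm_eq_inner[symmetric] divide_inverse)
    thus ?thesis by auto
  qed
  show ?case unfolding onz_def
  proof (intro allI impI)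
    fix i j assume i: "i < Suc m" and j: "j < Suc m"
    show "inner (?u i) (?u j) = (if i = j \<and> ?u i \<noteq> 0 then 1 else 0)"
    proof (cases "i = m"; cases "j = m")
      assume "i = m" "j = m" thus ?thesis using umm by simp
    next
      assume "i = m" "j \<noteq> m" thus ?thesis using umo[of j] j by simp
    next
      assume "i \<noteq> m" "j = m" thus ?thesis using umo[of i] i by (simp add: inner_commute)
    next
      assume "i \<noteq> m" "j \<noteq> m" thus ?thesis using Suc i j by (simp add: onz_def)
    qed
  qed
qed

lemma gs_span: "\<exists>c. d m = (\<Sum>j<M. c j *\<^sub>R gs d j)" if "m < M"
proof -
  let ?u = "gs d"
  define w where "w = d m - (\<Sum>j<m. inner (d m) (?u j) *\<^sub>R ?u j)"
  have um: "?u m = (if w = 0 then 0 else w /\<^sub>R norm w)" by (simp add: gs_eq[of d m] w_def Let_def)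
  have wu: "w = norm w *\<^sub>R ?u m" using um by auto
  define c where "c j = (if j < m then inner (d m) (?u j) else if j = m then norm w else 0)" for j
  have "(\<Sum>j<M. c j *\<^sub>R ?u j) = (\<Sum>j<Suc m. c j *\<^sub>R ?u j)"
    using that by (intro sum.mono_neutral_right) (auto simp: c_def)
  also have "\<dots> = (\<Sum>j<m. inner (d m) (?u j) *\<^sub>R ?u j) + norm w *\<^sub>R ?u m"
    by (simp add: c_def)
  also have "\<dots> = d m" using wu by (simp add: w_def)
  finally show ?thesis by metis
qed

lemma parseval_gs:
  fixes d :: "nat \<Rightarrow> 'a::real_inner"
  assumes dense: "\<And>x e. 0 < e \<Longrightarrow> \<exists>m. norm (x - d m) < e"
  shows "(\<lambda>M. \<Sum>j<M. inner x (gs d j) *\<^sub>R gs d j) \<longlonglongrightarrow> x"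
    and "(\<lambda>j. (inner x (gs d j))^2) sums (norm x ^2)"
proof -
  have conv: "(\<lambda>M. norm (x - (\<Sum>j<M. inner x (gs d j) *\<^sub>R gs d j))) \<longlonglongrightarrow> 0"
  proof (rule LIMSEQ_I)
    fix r :: real assume r: "0 < r"
    obtain m where m: "norm (x - d m) < r" using dense[OF r] by blast
    show "\<exists>no. \<forall>M\<ge>no. norm (norm (x - (\<Sum>j<M. inner x (gs d j) *\<^sub>R gs d j)) - 0) < r"
    proof (intro exI allI impI)
      fix M assume "Suc m \<le> M"
      hence "m < M" by simp
      then obtain c where c: "d m = (\<Sum>j<M. c j *\<^sub>R gs d j)" using gs_span[of m M d] by blast
      have "norm (x - (\<Sum>j<M. inner x (gs d j) *\<^sub>R gs d j)) \<le> norm (x - d m)"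
        unfolding c by (rule onz_best[OF gs_onz])
      thus "norm (norm (x - (\<Sum>j<M. inner x (gs d j) *\<^sub>R gs d j)) - 0) < r" using m by simp
    qed
  qed
  hence "(\<lambda>M. x - (\<Sum>j<M. inner x (gs d j) *\<^sub>R gs d j)) \<longlonglongrightarrow> 0"
    by (simp only: tendsto_norm_zero_iff)
  hence "(\<lambda>M. x - (x - (\<Sum>j<M. inner x (gs d j) *\<^sub>R gs d j))) \<longlonglongrightarrow> x - 0"
    by (intro tendsto_intros)
  thus "(\<lambda>M. \<Sum>j<M. inner x (gs d j) *\<^sub>R gs d j) \<longlonglongrightarrow> x" by simp
  have "(\<lambda>M. norm x ^2 - norm (x - (\<Sum>j<M. inner x (gs d j) *\<^sub>R gs d j))^2) \<longlonglongrightarrow> norm x^2 - 0^2"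
    by (intro tendsto_intros conv)
  moreover have "norm x ^2 - norm (x - (\<Sum>j<M. inner x (gs d j) *\<^sub>R gs d j))^2 = (\<Sum>j<M. (inner x (gs d j))^2)" for M
    using onz_pythag[OF gs_onz, of x d M] by linarith
  ultimately show "(\<lambda>j. (inner x (gs d j))^2) sums (norm x ^2)" unfolding sums_def by simp
qed

lemma dense_seq_exists:
  "\<exists>d :: nat \<Rightarrow> 'a::{real_normed_vector, second_countable_topology}. \<forall>x e. 0 < e \<longrightarrow> (\<exists>m. norm (x - d m) < e)"
proof -
  obtain D :: "'a set" where D: "countable D" "\<And>U. open U \<Longrightarrow> U \<noteq> {} \<Longrightarrow> \<exists>y \<in> D. y \<in> U"
    using countable_dense_exists by blast
  have "D \<noteq> {}" using D(2)[of UNIV] by auto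
  define d where "d = from_nat_into D"
  have rd: "range d = D" using \<open>D \<noteq> {}\<close> D(1) by (simp add: d_def)
  show ?thesis
  proof (rule exI[of _ d], intro allI impI)
    fix x :: 'a and e :: real assume e: "0 < e"
    obtain y where "y \<in> D" "y \<in> ball x e" using D(2)[of "ball x e"] e by auto
    then obtain m where "y = d m" "dist x y < e" using rd by auto
    thus "\<exists>m. norm (x - d m) < e" by (auto simp: dist_norm)
  qed
qed


locale sgsys =
  fixes T :: "real \<Rightarrow> 'x::{real_inner, banach, second_countable_topology} \<Rightarrow> 'x"
    and N :: "nat \<Rightarrow> 'x \<Rightarrow> 'x" and n :: nat and M \<nu> :: real
  assumes T_lin: "\<forall>t\<ge>0. bounded_linear (T t)"
    and T_0: "T 0 = id"
    and T_semigroup: "\<forall>s\<ge>0. \<forall>t\<ge>0. T (s + t) = T s \<circ> T t"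
    and T_strong: "\<forall>x. ((\<lambda>t. T t x) \<longlongrightarrow> x) (at_right 0)"
    and M_ge: "M \<ge> 1" and nu_pos: "\<nu> > 0"
    and T_bound: "\<forall>t\<ge>0. onorm (T t) \<le> M * exp (- \<nu> * t)"
    and N_lin: "\<forall>i<n. bounded_linear (N i)"
begin

lemma Tbl: "t \<ge> 0 \<Longrightarrow> bounded_linear (T t)" using T_lin by blast

lemma Nbl: "i < n \<Longrightarrow> bounded_linear (N i)" using N_lin by blast

lemma Tnorm: "t \<ge> 0 \<Longrightarrow> norm (T t x) \<le> M * exp (- \<nu> * t) * norm x"
proof -
  assume t: "t \<ge> 0"
  have "norm (T t x) \<le> onorm (T t) * norm x" by (rule onorm[OF Tbl[OF t]])
  also have "\<dots> \<le> M * exp (- \<nu> * t) * norm x" using T_bound t by (intro mult_right_mono) auto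
  finally show ?thesis .
qed

lemma TnormM: "t \<ge> 0 \<Longrightarrow> norm (T t x) \<le> M * norm x"
proof -
  assume t: "t \<ge> 0"
  have "exp (- \<nu> * t) \<le> 1" using t nu_pos by simp
  hence "M * exp (- \<nu> * t) * norm x \<le> M * 1 * norm x" using M_ge by (intro mult_right_mono mult_left_mono) auto
  thus ?thesis using Tnorm[OF t, of x] by simp
qed

lemma T_cont_aux:
  assumes e: "0 < e"
  shows "\<exists>\<delta>>0. \<forall>a b. 0 \<le> a \<longrightarrow> 0 \<le> b \<longrightarrow> \<bar>a - b\<bar> < \<delta> \<longrightarrow> norm (T a y - T b y) \<le> e"
proof -
  have "((\<lambda>t. T t y) \<longlongrightarrow> y) (at_right 0)" using T_strong by blast
  moreover have "0 < e / M" using e M_ge by simp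
  ultimately have "eventually (\<lambda>t. dist (T t y) y < e / M) (at_right 0)" by (rule tendstoD)
  then obtain \<delta> where \<delta>: "\<delta> > 0" "\<And>h. 0 < h \<Longrightarrow> h < \<delta> \<Longrightarrow> dist (T h y) y < e/M"
    unfolding eventually_at_right_field by auto
  have one: "norm (T b y - T a y) \<le> e" if ab: "0 \<le> a" "a \<le> b" "b - a < \<delta>" for a b
  proof (cases "a = b")
    case True thus ?thesis using e by simp
  next
    case False
    have "T b = T a \<circ> T (b - a)" using T_semigroup[rule_format, of a "b - a"] ab by simp
    hence "T b y - T a y = T a (T (b - a) y) - T a y" by simp
    also have "\<dots> = T a (T (b - a) y - y)" using linear_diff[OF bounded_linear.linear[OF Tbl[OF ab(1)]]] by simp
    finally have "norm (T b y - T a y) \<le> M * norm (T (b - a) y - y)" using TnormM[OF ab(1)] by simp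
    also have "\<dots> \<le> M * (e / M)"
      using \<delta>(2)[of "b - a"] ab False M_ge by (intro mult_left_mono) (auto simp: dist_norm)
    also have "\<dots> = e" using M_ge by simp
    finally show ?thesis .
  qed
  show ?thesis
  proof (intro exI[of _ \<delta>] conjI allI impI)
    fix a b :: real assume "0 \<le> a" "0 \<le> b" "\<bar>a - b\<bar> < \<delta>"
    thus "norm (T a y - T b y) \<le> e"
      using one[of a b] one[of b a] by (cases "a \<le> b") (auto simp: norm_minus_commute)
  qed (use \<delta> in auto)
qed

definition Phi :: "real \<times> 'x \<Rightarrow> 'x" where "Phi p = T (max (fst p) 0) (snd p)"

lemma Phi_cont: "continuous_on UNIV Phi"
proof (intro continuous_at_imp_continuous_on ballI)
  fix p :: "real \<times> 'x"
  obtain t0 y0 where p: "p = (t0, y0)" by fastforce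
  show "isCont Phi p" unfolding continuous_at_eps_delta
  proof (intro allI impI)
    fix e :: real assume e: "0 < e"
    obtain \<delta>1 where d1: "\<delta>1 > 0" "\<And>a b. 0 \<le> a \<Longrightarrow> 0 \<le> b \<Longrightarrow> \<bar>a - b\<bar> < \<delta>1 \<Longrightarrow> norm (T a y0 - T b y0) \<le> e/2"
      using T_cont_aux[of "e/2" y0] e by auto
    define \<delta> where "\<delta> = min \<delta>1 (e / (2*M))"
    have "\<delta> > 0" using d1 e M_ge by (simp add: \<delta>_def)
    moreover have "dist (Phi q) (Phi p) < e" if q: "dist q p < \<delta>" for q
    proof -
      obtain t y where qq: "q = (t, y)" by fastforce
      have "dist t t0 < \<delta>1" "dist y y0 < e / (2*M)"
        using dist_fst_le[of q p] dist_snd_le[of q p] q by (auto simp: \<delta>_def p qq)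
      hence tt: "\<bar>max t 0 - max t0 0\<bar> < \<delta>1" and yy: "norm (y - y0) < e / (2*M)"
        by (auto simp: dist_real_def dist_norm)
      let ?a = "max t 0" and ?b = "max t0 0"
      have "Phi q - Phi p = T ?a (y - y0) + (T ?a y0 - T ?b y0)"
        using linear_diff[OF bounded_linear.linear[OF Tbl[of ?a]]] by (simp add: Phi_def p qq)
      hence "norm (Phi q - Phi p) \<le> norm (T ?a (y - y0)) + norm (T ?a y0 - T ?b y0)"
        by (metis norm_triangle_ineq)
      also have "\<dots> \<le> M * norm (y - y0) + e/2"
        using TnormM[of ?a "y - y0"] d1(2)[of ?a ?b] tt by (intro add_mono) auto
      also have "M * norm (y - y0) < M * (e / (2*M))" using yy M_ge by (intro mult_strict_left_mono) auto
      hence "M * norm (y - y0) + e/2 < e" using M_ge by simp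
      finally show ?thesis by (simp add: dist_norm)
    qed
    ultimately show "\<exists>\<delta>>0. \<forall>x'. dist x' p < \<delta> \<longrightarrow> dist (Phi x') (Phi p) < e" by blast
  qed
qed

lemma Phi_meas: "Phi \<in> borel_measurable (borel \<Otimes>\<^sub>M borel)"
  unfolding borel_prod by (rule borel_measurable_continuous_onI[OF Phi_cont])

lemma posM_space: "space (posM K) = PiE {..K} (\<lambda>_. {0<..})"
  by (simp add: posM_def space_PiM)

lemma posM_pos: "s \<in> space (posM K) \<Longrightarrow> j \<le> K \<Longrightarrow> 0 < s j"
  by (auto simp: posM_space)

lemma meas_coord: "j \<le> K \<Longrightarrow> (\<lambda>s. s j) \<in> borel_measurable (posM K)"
proof -
  assume j: "j \<le> K"
  have "(\<lambda>s. s j) \<in> measurable (posM K) (restrict_space lborel {0<..})"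
    unfolding posM_def using j by (intro measurable_component_singleton) auto
  moreover have "(\<lambda>x::real. x) \<in> measurable (restrict_space lborel {0<..}) borel"
    by (intro measurable_restrict_space1) simp
  ultimately show ?thesis using measurable_comp[of "\<lambda>s. s j" "posM K" "restrict_space lborel {0<..}" "\<lambda>x::real. x" borel]
    by (simp add: o_def)
qed

lemma meas_T:
  assumes F: "F \<in> borel_measurable (posM K)" and j: "j \<le> K"
  shows "(\<lambda>s. T (s j) (F s)) \<in> borel_measurable (posM K)"
proof -
  have "(\<lambda>s. (s j, F s)) \<in> measurable (posM K) (borel \<Otimes>\<^sub>M borel)"
    using meas_coord[OF j] F by (intro measurable_Pair) auto
  hence 1: "(\<lambda>s. Phi (s j, F s)) \<in> borel_measurable (posM K)"
    using measurable_comp[OF _ Phi_meas] by (simp add: o_def)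
  have 2: "Phi (s j, F s) = T (s j) (F s)" if "s \<in> space (posM K)" for s
    using posM_pos[OF that j] by (simp add: Phi_def)
  show ?thesis using measurable_cong[of "posM K" "\<lambda>s. Phi (s j, F s)" "\<lambda>s. T (s j) (F s)" borel] 1 2 by blast
qed

lemma meas_bl:
  assumes F: "F \<in> borel_measurable M'" and bl: "bounded_linear L"
  shows "(\<lambda>s. L (F s)) \<in> borel_measurable M'"
proof -
  have "L \<in> borel_measurable borel"
    by (intro borel_measurable_continuous_onI linear_continuous_on bl)
  thus ?thesis using measurable_comp[OF F] by (simp add: o_def)
qed

lemma reach_meas:
  "k \<le> K \<Longrightarrow> (\<forall>j<k. idx j < n) \<Longrightarrow> (\<lambda>s. reach_chain T N k s idx x) \<in> borel_measurable (posM K)"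
proof (induction k)
  case 0
  thus ?case using meas_T[of "\<lambda>_. x" K 0] by simp
next
  case (Suc k)
  have "(\<lambda>s. reach_chain T N k s idx x) \<in> borel_measurable (posM K)"
    using Suc by simp
  moreover have "bounded_linear (N (idx k))" using Suc.prems by (intro Nbl) simp
  ultimately have "(\<lambda>s. N (idx k) (reach_chain T N k s idx x)) \<in> borel_measurable (posM K)"
    by (rule meas_bl)
  from meas_T[OF this, of "Suc k"] Suc.prems show ?case by simp
qed

lemma obs_meas:
  "k \<le> K \<Longrightarrow> (\<forall>j<k. idx j < n) \<Longrightarrow> F \<in> borel_measurable (posM K) \<Longrightarrow>
    (\<lambda>s. obs_chain T N k s idx (F s)) \<in> borel_measurable (posM K)"
proof (induction k arbitrary: F)
  case 0
  thus ?case using meas_T[of F K 0] by simp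
next
  case (Suc k)
  have "(\<lambda>s. T (s (Suc k)) (F s)) \<in> borel_measurable (posM K)"
    using Suc.prems by (intro meas_T) auto
  moreover have "bounded_linear (N (idx k))" using Suc.prems by (intro Nbl) simp
  ultimately have "(\<lambda>s. N (idx k) (T (s (Suc k)) (F s))) \<in> borel_measurable (posM K)"
    by (rule meas_bl)
  hence "(\<lambda>s. obs_chain T N k s idx (N (idx k) (T (s (Suc k)) (F s)))) \<in> borel_measurable (posM K)"
    using Suc by (intro Suc.IH) auto
  thus ?case by simp
qed

lemma reach_bl:
  "(\<forall>j\<le>k. 0 \<le> s j) \<Longrightarrow> (\<forall>j<k. idx j < n) \<Longrightarrow> bounded_linear (reach_chain T N k s idx)"
proof (induction k)
  case 0 thus ?case using Tbl by simp
next
  case (Suc k)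
  have R: "bounded_linear (reach_chain T N k s idx)" using Suc by simp
  have Nk: "bounded_linear (N (idx k))" using Suc.prems by (intro Nbl) simp
  have Tk: "bounded_linear (T (s (Suc k)))" using Suc.prems by (intro Tbl) simp
  have "bounded_linear (\<lambda>x. T (s (Suc k)) (N (idx k) (reach_chain T N k s idx x)))"
    by (rule bounded_linear_compose[OF Tk bounded_linear_compose[OF Nk R]])
  thus ?case by (simp add: o_def)
qed

lemma obs_bl:
  "(\<forall>j\<le>k. 0 \<le> s j) \<Longrightarrow> (\<forall>j<k. idx j < n) \<Longrightarrow> bounded_linear (obs_chain T N k s idx)"
proof (induction k)
  case 0 thus ?case using Tbl by simp
next
  case (Suc k)
  have R: "bounded_linear (obs_chain T N k s idx)" using Suc by simp
  have Nk: "bounded_linear (N (idx k))" using Suc.prems by (intro Nbl) simp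
  have Tk: "bounded_linear (T (s (Suc k)))" using Suc.prems by (intro Tbl) simp
  have "bounded_linear (\<lambda>x. obs_chain T N k s idx (N (idx k) (T (s (Suc k)) x)))"
    by (rule bounded_linear_compose[OF R bounded_linear_compose[OF Nk Tk]])
  thus ?case by (simp add: o_def)
qed

lemma reach_norm:
  "(\<forall>j\<le>k. 0 \<le> s j) \<Longrightarrow> (\<forall>j<k. idx j < n) \<Longrightarrow>
   norm (reach_chain T N k s idx x) \<le> (\<Prod>j\<le>k. M * exp (- \<nu> * s j)) * (\<Prod>j<k. onorm (N (idx j))) * norm x"
proof (induction k)
  case 0 thus ?case using Tnorm by simp
next
  case (Suc k)
  let ?P = "\<Prod>j\<le>k. M * exp (- \<nu> * s j)" and ?Q = "\<Prod>j<k. onorm (N (idx j))"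
  have "norm (reach_chain T N (Suc k) s idx x) = norm (T (s (Suc k)) (N (idx k) (reach_chain T N k s idx x)))" by simp
  also have "\<dots> \<le> M * exp (- \<nu> * s (Suc k)) * norm (N (idx k) (reach_chain T N k s idx x))"
    using Suc.prems by (intro Tnorm) auto
  also have "\<dots> \<le> M * exp (- \<nu> * s (Suc k)) * (onorm (N (idx k)) * norm (reach_chain T N k s idx x))"
    using Suc.prems M_ge by (intro mult_left_mono onorm Nbl) auto
  also have "\<dots> \<le> M * exp (- \<nu> * s (Suc k)) * (onorm (N (idx k)) * (?P * ?Q * norm x))"
    using Suc M_ge onorm_pos_le[OF Nbl, of "idx k"] by (intro mult_left_mono) auto
  also have "\<dots> = (\<Prod>j\<le>Suc k. M * exp (- \<nu> * s j)) * (\<Prod>j<Suc k. onorm (N (idx j))) * norm x"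
    by (simp add: atMost_Suc lessThan_Suc algebra_simps)
  finally show ?case .
qed

lemma obs_norm:
  "(\<forall>j\<le>k. 0 \<le> s j) \<Longrightarrow> (\<forall>j<k. idx j < n) \<Longrightarrow>
   norm (obs_chain T N k s idx x) \<le> (\<Prod>j\<le>k. M * exp (- \<nu> * s j)) * (\<Prod>j<k. onorm (N (idx j))) * norm x"
proof (induction k arbitrary: x)
  case 0 thus ?case using Tnorm by simp
next
  case (Suc k)
  let ?P = "\<Prod>j\<le>k. M * exp (- \<nu> * s j)" and ?Q = "\<Prod>j<k. onorm (N (idx j))"
  have P0: "0 \<le> ?P" using M_ge by (intro prod_nonneg) auto
  have Q0: "0 \<le> ?Q" using Suc.prems by (intro prod_nonneg onorm_pos_le Nbl) auto
  have "norm (obs_chain T N (Suc k) s idx x) = norm (obs_chain T N k s idx (N (idx k) (T (s (Suc k)) x)))" by simp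
  also have "\<dots> \<le> ?P * ?Q * norm (N (idx k) (T (s (Suc k)) x))"
    using Suc by auto
  also have "\<dots> \<le> ?P * ?Q * (onorm (N (idx k)) * norm (T (s (Suc k)) x))"
    using Suc.prems P0 Q0 by (intro mult_left_mono onorm Nbl mult_nonneg_nonneg) auto
  also have "\<dots> \<le> ?P * ?Q * (onorm (N (idx k)) * (M * exp (- \<nu> * s (Suc k)) * norm x))"
    using Suc.prems P0 Q0 onorm_pos_le[OF Nbl, of "idx k"] by (intro mult_left_mono Tnorm mult_nonneg_nonneg) auto
  also have "\<dots> = (\<Prod>j\<le>Suc k. M * exp (- \<nu> * s j)) * (\<Prod>j<Suc k. onorm (N (idx j))) * norm x"
    by (simp add: atMost_Suc lessThan_Suc algebra_simps)
  finally show ?case .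
qed

end


lemma exp_int_pos:
  fixes c :: real assumes c: "0 < c"
  shows "(\<integral>\<^sup>+t. ennreal (exp (- c * t)) \<partial>restrict_space lborel {0<..}) = ennreal (1/c)"
proof -
  have "(\<integral>\<^sup>+t. ennreal (exp (- c * t)) \<partial>restrict_space lborel {0<..})
      = (\<integral>\<^sup>+t. ennreal (exp (- c * t)) * indicator {0<..} t \<partial>lborel)"
    by (rule nn_integral_restrict_space) simp
  also have "\<dots> = (\<integral>\<^sup>+t. ennreal (exp (- c * t)) * indicator {0..} t \<partial>lborel)"
  proof (rule nn_integral_cong_AE)
    show "AE x in lborel. ennreal (exp (- c * x)) * indicator {0<..} x = ennreal (exp (- c * x)) * indicator {0..} x"
      using AE_lborel_singleton[of "0::real"] by eventually_elim (auto simp: indicator_def)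
  qed
  also have "\<dots> = ennreal (exp (- c * 0) / c)"
  proof (rule nn_integral_has_integral_lebesgue')
    show "((\<lambda>x. exp (- c * x)) has_integral exp (- c * 0) / c) {0..}"
      by (rule has_integral_exp_minus_to_infinity[OF c])
  qed simp
  finally show ?thesis by simp
qed

lemma posM_prod_int:
  fixes c A :: real assumes c: "0 < c" and A: "0 \<le> A"
  shows "(\<integral>\<^sup>+s. (\<Prod>j\<in>{..k}. ennreal (A * exp (- c * s j))) \<partial>posM k) = ennreal ((A / c) ^ Suc k)"
proof -
  interpret P: product_sigma_finite "\<lambda>_::nat. restrict_space lborel ({0<..} :: real set)"
    by (rule product_sigma_finite.intro, rule sigma_finite_measure_restrict_space[OF sigma_finite_lborel]) simp
  have "(\<integral>\<^sup>+s. (\<Prod>j\<in>{..k}. ennreal (A * exp (- c * s j))) \<partial>posM k)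
     = (\<Prod>j\<in>{..k}. (\<integral>\<^sup>+t. ennreal (A * exp (- c * t)) \<partial>restrict_space lborel {0<..}))"
    unfolding posM_def
  proof (rule P.product_nn_integral_prod)
    fix j :: nat
    show "(\<lambda>t. ennreal (A * exp (- c * t))) \<in> borel_measurable (restrict_space lborel {0<..})"
      by (rule measurable_restrict_space1) simp
  qed simp
  also have "(\<integral>\<^sup>+t. ennreal (A * exp (- c * t)) \<partial>restrict_space lborel {0<..}) = ennreal (A / c)"
  proof -
    have "(\<integral>\<^sup>+t. ennreal (A * exp (- c * t)) \<partial>restrict_space lborel {0<..})
        = (\<integral>\<^sup>+t. ennreal A * ennreal (exp (- c * t)) \<partial>restrict_space lborel {0<..})"
      using A by (simp add: ennreal_mult)
    also have "\<dots> = ennreal A * (\<integral>\<^sup>+t. ennreal (exp (- c * t)) \<partial>restrict_space lborel {0<..})"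
      by (rule nn_integral_cmult) (rule measurable_restrict_space1, simp)
    also have "\<dots> = ennreal (A / c)" using exp_int_pos[OF c] A c by (simp add: ennreal_mult[symmetric] divide_inverse)
    finally show ?thesis .
  qed
  also have "(\<Prod>j\<in>{..k}. ennreal (A / c)) = ennreal (A / c) ^ Suc k" by simp
  also have "\<dots> = ennreal ((A / c) ^ Suc k)" using A c by (intro ennreal_power) simp
  finally show ?thesis .
qed

lemma sum_prod_idxs:
  fixes f :: "nat \<Rightarrow> 'c::comm_semiring_1"
  shows "(\<Sum>idx\<in>idxs k n. \<Prod>j<k. f (idx j)) = (\<Sum>i<n. f i) ^ k"
proof -
  have "(\<Prod>j\<in>{..<k}. \<Sum>i\<in>{..<n}. f i) = (\<Sum>g\<in>PiE {..<k} (\<lambda>_. {..<n}). \<Prod>j\<in>{..<k}. f (g j))"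
    by (rule prod_sum_PiE) auto
  thus ?thesis by (simp add: idxs_def)
qed

locale sgsys2 = sgsys T N n M \<nu>
  for T :: "real \<Rightarrow> 'x::{real_inner, banach, second_countable_topology} \<Rightarrow> 'x"
    and N n M \<nu> +
  assumes small: "M\<^sup>2 * (sqrt (\<Sum>i<n. onorm (N i \<circ> adj (N i))))\<^sup>2 / (2 * \<nu>) < 1"
begin

definition "aa = M^2 / (2 * \<nu>)"
definition "GG = (\<Sum>i<n. onorm (N i) ^ 2)"

lemma aa_pos: "0 < aa" using M_ge nu_pos by (simp add: aa_def)
lemma GG_nonneg: "0 \<le> GG" by (simp add: GG_def sum_nonneg)

lemma q_lt1: "aa * GG < 1"
proof -
  have "GG \<le> (\<Sum>i<n. onorm (N i \<circ> adj (N i)))"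
    unfolding GG_def by (intro sum_mono onorm_sq_le_adj Nbl) auto
  moreover have "0 \<le> (\<Sum>i<n. onorm (N i \<circ> adj (N i)))"
    using GG_nonneg calculation by linarith
  ultimately have "aa * GG \<le> aa * (\<Sum>i<n. onorm (N i \<circ> adj (N i)))"
    using aa_pos by (intro mult_left_mono) auto
  also have "\<dots> < 1" using small \<open>0 \<le> (\<Sum>i<n. onorm (N i \<circ> adj (N i)))\<close> by (simp add: aa_def)
  finally show ?thesis .
qed

lemma chain_sq_bound:
  assumes s: "s \<in> space (posM k)" and idx: "\<forall>j<k. idx j < n"
    and nz: "norm z \<le> (\<Prod>j\<le>k. M * exp (- \<nu> * s j)) * (\<Prod>j<k. onorm (N (idx j))) * norm x * B"
    and B: "0 \<le> B"
  shows "ennreal ((norm z)\<^sup>2) \<le> (\<Prod>j\<in>{..k}. ennreal (M^2 * exp (- (2*\<nu>) * s j)))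
          * ennreal ((\<Prod>j<k. onorm (N (idx j)) ^ 2) * norm x ^ 2 * B^2)"
proof -
  have sp: "\<forall>j\<le>k. 0 \<le> s j" using posM_pos[OF s] less_imp_le by blast
  have P0: "0 \<le> (\<Prod>j\<le>k. M * exp (- \<nu> * s j))" using M_ge by (intro prod_nonneg) auto
  have Q0: "0 \<le> (\<Prod>j<k. onorm (N (idx j)))" using idx by (intro prod_nonneg onorm_pos_le Nbl) auto
  have "(norm z)^2 \<le> ((\<Prod>j\<le>k. M * exp (- \<nu> * s j)) * (\<Prod>j<k. onorm (N (idx j))) * norm x * B)^2"
    using nz by (intro power_mono) auto
  also have "\<dots> = (\<Prod>j\<le>k. (M * exp (- \<nu> * s j))^2) * ((\<Prod>j<k. onorm (N (idx j)) ^ 2) * norm x ^ 2 * B^2)"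
    by (simp add: power_mult_distrib prod_power_distrib)
  also have "(\<Prod>j\<le>k. (M * exp (- \<nu> * s j))^2) = (\<Prod>j\<le>k. M^2 * exp (- (2*\<nu>) * s j))"
  proof (intro prod.cong refl)
    fix j
    have "(exp (- \<nu> * s j))^2 = exp (- (2*\<nu>) * s j)"
      by (simp add: power2_eq_square exp_add[symmetric])
    thus "(M * exp (- \<nu> * s j))^2 = M^2 * exp (- (2*\<nu>) * s j)" by (simp add: power_mult_distrib)
  qed
  finally have le: "(norm z)^2 \<le> (\<Prod>j\<le>k. M^2 * exp (- (2*\<nu>) * s j)) * ((\<Prod>j<k. onorm (N (idx j)) ^ 2) * norm x ^ 2 * B^2)" .
  have "ennreal ((norm z)\<^sup>2) \<le> ennreal ((\<Prod>j\<le>k. M^2 * exp (- (2*\<nu>) * s j)) * ((\<Prod>j<k. onorm (N (idx j)) ^ 2) * norm x ^ 2 * B^2))"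
    using le by (rule ennreal_leI)
  also have "\<dots> = ennreal (\<Prod>j\<le>k. M^2 * exp (- (2*\<nu>) * s j)) * ennreal ((\<Prod>j<k. onorm (N (idx j)) ^ 2) * norm x ^ 2 * B^2)"
    by (rule ennreal_mult) (auto intro!: prod_nonneg mult_nonneg_nonneg)
  also have "ennreal (\<Prod>j\<le>k. M^2 * exp (- (2*\<nu>) * s j)) = (\<Prod>j\<in>{..k}. ennreal (M^2 * exp (- (2*\<nu>) * s j)))"
    by (rule prod_ennreal[symmetric]) simp
  finally show ?thesis .
qed

lemma chain_int_bound:
  assumes idx: "\<forall>j<k. idx j < n" and B: "0 \<le> B"
    and nz: "\<And>s. s \<in> space (posM k) \<Longrightarrow> norm (z s) \<le> (\<Prod>j\<le>k. M * exp (- \<nu> * s j)) * (\<Prod>j<k. onorm (N (idx j))) * norm x * B"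
  shows "(\<integral>\<^sup>+s. ennreal ((norm (z s))\<^sup>2) \<partial>posM k) \<le> ennreal (aa ^ Suc k * (\<Prod>j<k. onorm (N (idx j)) ^ 2) * norm x ^ 2 * B^2)"
proof -
  have "(\<integral>\<^sup>+s. ennreal ((norm (z s))\<^sup>2) \<partial>posM k) \<le>
      (\<integral>\<^sup>+s. (\<Prod>j\<in>{..k}. ennreal (M^2 * exp (- (2*\<nu>) * s j))) * ennreal ((\<Prod>j<k. onorm (N (idx j)) ^ 2) * norm x ^ 2 * B^2) \<partial>posM k)"
    by (intro nn_integral_mono chain_sq_bound[OF _ idx nz B])
  also have "\<dots> = (\<integral>\<^sup>+s. (\<Prod>j\<in>{..k}. ennreal (M^2 * exp (- (2*\<nu>) * s j))) \<partial>posM k) * ennreal ((\<Prod>j<k. onorm (N (idx j)) ^ 2) * norm x ^ 2 * B^2)"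
  proof (rule nn_integral_multc)
    show "(\<lambda>s. \<Prod>j\<in>{..k}. ennreal (M^2 * exp (- (2*\<nu>) * s j))) \<in> borel_measurable (posM k)"
    proof (rule borel_measurable_prod_ennreal)
      fix j assume "j \<in> {..k}"
      hence "(\<lambda>s. s j) \<in> borel_measurable (posM k)" by (intro meas_coord) auto
      moreover have "(\<lambda>t. ennreal (M^2 * exp (- (2*\<nu>) * t))) \<in> borel_measurable borel" by simp
      ultimately show "(\<lambda>s. ennreal (M^2 * exp (- (2*\<nu>) * s j))) \<in> borel_measurable (posM k)"
        by (rule measurable_compose)
    qed
  qed
  also have "\<dots> = ennreal (aa ^ Suc k) * ennreal ((\<Prod>j<k. onorm (N (idx j)) ^ 2) * norm x ^ 2 * B^2)"
    using posM_prod_int[of "2*\<nu>" "M^2" k] nu_pos by (simp add: aa_def)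
  also have "\<dots> = ennreal (aa ^ Suc k * (\<Prod>j<k. onorm (N (idx j)) ^ 2) * norm x ^ 2 * B^2)"
    using aa_pos by (simp add: ennreal_mult[symmetric] prod_nonneg mult.assoc)
  finally show ?thesis .
qed

lemma chain_sum_bound:
  assumes B: "0 \<le> B"
    and nz: "\<And>idx s. idx \<in> idxs k n \<Longrightarrow> s \<in> space (posM k) \<Longrightarrow> norm (z idx s) \<le> (\<Prod>j\<le>k. M * exp (- \<nu> * s j)) * (\<Prod>j<k. onorm (N (idx j))) * norm x * B"
  shows "(\<Sum>idx\<in>idxs k n. \<integral>\<^sup>+s. ennreal ((norm (z idx s))\<^sup>2) \<partial>posM k) \<le> ennreal (aa * (aa * GG) ^ k * norm x ^ 2 * B^2)"
proof -
  have idx: "\<forall>j<k. idx j < n" if "idx \<in> idxs k n" for idx using that by (auto simp: idxs_def PiE_def Pi_def)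
  have "(\<Sum>idx\<in>idxs k n. \<integral>\<^sup>+s. ennreal ((norm (z idx s))\<^sup>2) \<partial>posM k)
      \<le> (\<Sum>idx\<in>idxs k n. ennreal (aa ^ Suc k * (\<Prod>j<k. onorm (N (idx j)) ^ 2) * norm x ^ 2 * B^2))"
    by (intro sum_mono chain_int_bound[OF idx B nz]) auto
  also have "\<dots> = ennreal (\<Sum>idx\<in>idxs k n. aa ^ Suc k * (\<Prod>j<k. onorm (N (idx j)) ^ 2) * norm x ^ 2 * B^2)"
    using aa_pos by (intro sum_ennreal) (auto intro!: mult_nonneg_nonneg prod_nonneg)
  also have "(\<Sum>idx\<in>idxs k n. aa ^ Suc k * (\<Prod>j<k. onorm (N (idx j)) ^ 2) * norm x ^ 2 * B^2)
      = aa ^ Suc k * (\<Sum>idx\<in>idxs k n. (\<Prod>j<k. onorm (N (idx j)) ^ 2)) * norm x ^ 2 * B^2"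
    by (simp add: sum_distrib_left sum_distrib_right mult.assoc)
  also have "(\<Sum>idx\<in>idxs k n. (\<Prod>j<k. onorm (N (idx j)) ^ 2)) = GG ^ k"
    unfolding GG_def by (rule sum_prod_idxs)
  also have "aa ^ Suc k * GG ^ k * norm x ^ 2 * B^2 = aa * (aa * GG) ^ k * norm x ^ 2 * B^2"
    by (simp add: power_mult_distrib)
  finally show ?thesis .
qed

definition "cc = aa / (1 - aa * GG)"

lemma cc_pos: "0 < cc" using aa_pos q_lt1 by (simp add: cc_def)

lemma geo_sum: "(\<Sum>k. ennreal (aa * (aa * GG) ^ k * X)) = ennreal (cc * X)" if "0 \<le> X"
proof -
  have q: "norm (aa * GG) < 1" using q_lt1 aa_pos GG_nonneg by simp
  have "(\<lambda>k. (aa * GG) ^ k) sums (1 / (1 - aa * GG))" by (rule geometric_sums[OF q])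
  hence "(\<lambda>k. aa * ((aa * GG) ^ k) * X) sums (aa * (1 / (1 - aa * GG)) * X)"
    by (intro sums_mult sums_mult2)
  hence s: "(\<lambda>k. aa * (aa * GG) ^ k * X) sums (cc * X)" by (simp add: cc_def)
  have "(\<Sum>k. ennreal (aa * (aa * GG) ^ k * X)) = ennreal (\<Sum>k. aa * (aa * GG) ^ k * X)"
    using s aa_pos GG_nonneg that by (intro suminf_ennreal2) (auto simp: sums_iff)
  also have "\<dots> = ennreal (cc * X)" using s by (simp add: sums_iff)
  finally show ?thesis .
qed

end


definition fock_eq :: "nat \<Rightarrow> (nat \<Rightarrow> nat) \<Rightarrow> 'k fock \<Rightarrow> 'k fock \<Rightarrow> bool" where
  "fock_eq n d f g \<longleftrightarrow> (\<forall>k. \<forall>idx\<in>idxs (d k) n. \<forall>s\<in>space (posM k). f k s idx = g k s idx)"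

lemma fock_norm2_cong: "fock_eq n d f g \<Longrightarrow> fock_norm2 n d f = fock_norm2 n d g"
  unfolding fock_norm2_def fock_eq_def
  by (intro arg_cong[where f = suminf] ext sum.cong refl nn_integral_cong) auto

lemma fock_norm_cong: "fock_eq n d f g \<Longrightarrow> fock_norm n d f = fock_norm n d g"
  by (simp add: fock_norm_def fock_norm2_cong)

lemma fock_inner_cong: "fock_eq n d f f' \<Longrightarrow> fock_eq n d g g' \<Longrightarrow> fock_inner n d f g = fock_inner n d f' g'"
  unfolding fock_inner_def fock_eq_def
  by (intro arg_cong[where f = suminf] ext sum.cong refl Bochner_Integration.integral_cong) auto

lemma fock_spaceD:
  assumes "f \<in> fock_space n d" "idx \<in> idxs (d k) n"
  shows "(\<lambda>s. f k s idx) \<in> borel_measurable (posM k)" and "fock_norm2 n d f < \<infinity>"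
  using assms by (auto simp: fock_space_def)

definition fterm :: "nat \<Rightarrow> (nat \<Rightarrow> nat) \<Rightarrow> 'k::real_normed_vector fock \<Rightarrow> nat \<Rightarrow> ennreal" where
  "fterm n d f k = (\<Sum>idx\<in>idxs (d k) n. \<integral>\<^sup>+ s. ennreal ((norm (f k s idx))\<^sup>2) \<partial>posM k)"

lemma fock_norm2_fterm: "fock_norm2 n d f = (\<Sum>k. fterm n d f k)"
  by (simp add: fock_norm2_def fterm_def)

lemma finite_idxs[simp]: "finite (idxs d n)"
  by (simp add: idxs_def finite_PiE)

lemma fterm_le: "fterm n d f k \<le> fock_norm2 n d f"
  unfolding fock_norm2_fterm using sum_le_suminf[of "fterm n d f" "{k}"] by simp

lemma fterm_fin: "f \<in> fock_space n d \<Longrightarrow> fterm n d f k < \<infinity>"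
  using fterm_le[of n d f k] fock_spaceD(2)[of f n d] unfolding fock_space_def
  by (auto simp: order_le_less_trans)

lemma term_le_fterm: "idx \<in> idxs (d k) n \<Longrightarrow> (\<integral>\<^sup>+ s. ennreal ((norm (f k s idx))\<^sup>2) \<partial>posM k) \<le> fterm n d f k"
  unfolding fterm_def by (rule member_le_sum) auto

lemma term_fin: "f \<in> fock_space n d \<Longrightarrow> idx \<in> idxs (d k) n \<Longrightarrow> (\<integral>\<^sup>+ s. ennreal ((norm (f k s idx))\<^sup>2) \<partial>posM k) < \<infinity>"
  using term_le_fterm fterm_fin order_le_less_trans by blast

definition rterm :: "nat \<Rightarrow> (nat \<Rightarrow> nat) \<Rightarrow> 'k::real_normed_vector fock \<Rightarrow> nat \<Rightarrow> real" where
  "rterm n d f k = enn2real (fterm n d f k)"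

lemma rterm_eq: "f \<in> fock_space n d \<Longrightarrow> fterm n d f k = ennreal (rterm n d f k)"
  using fterm_fin[of f n d k] by (simp add: rterm_def less_top[symmetric])

lemma rterm_nonneg: "0 \<le> rterm n d f k" by (simp add: rterm_def)

lemma rterm_summable: "f \<in> fock_space n d \<Longrightarrow> summable (rterm n d f)"
proof -
  assume f: "f \<in> fock_space n d"
  have "(\<Sum>k. ennreal (rterm n d f k)) = fock_norm2 n d f"
    by (simp add: fock_norm2_fterm rterm_eq[OF f])
  also have "\<dots> \<noteq> top" using f by (auto simp: fock_space_def)
  finally show ?thesis by (intro summable_suminf_not_top rterm_nonneg)
qed

lemma fock_norm2_rterm: "f \<in> fock_space n d \<Longrightarrow> fock_norm2 n d f = ennreal (\<Sum>k. rterm n d f k)"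
  using rterm_summable[of f n d]
  by (simp add: fock_norm2_fterm rterm_eq suminf_ennreal2 rterm_nonneg)

lemma fock_norm_sq: "f \<in> fock_space n d \<Longrightarrow> fock_norm n d f ^ 2 = (\<Sum>k. rterm n d f k)"
  using rterm_summable[of f n d]
  by (simp add: fock_norm_def fock_norm2_rterm suminf_nonneg rterm_nonneg)

lemma sq_meas: "(\<lambda>s. f k s idx) \<in> borel_measurable M \<Longrightarrow> (\<lambda>s. ennreal ((norm (f k s idx))\<^sup>2)) \<in> borel_measurable M"
  by measurable

lemma fock_pair:
  fixes f :: "'a::real_normed_vector fock" and g :: "'b::real_normed_vector fock"
    and h :: "nat \<Rightarrow> (nat \<Rightarrow> real) \<Rightarrow> (nat \<Rightarrow> nat) \<Rightarrow> 'c::{banach,second_countable_topology}"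
  assumes f: "f \<in> fock_space n d" and g: "g \<in> fock_space n d"
    and hm: "\<And>k idx. idx \<in> idxs (d k) n \<Longrightarrow> (\<lambda>s. h k s idx) \<in> borel_measurable (posM k)"
    and hb: "\<And>k idx s. idx \<in> idxs (d k) n \<Longrightarrow> s \<in> space (posM k) \<Longrightarrow> norm (h k s idx) \<le> norm (f k s idx) * norm (g k s idx)"
  shows fock_pair_int: "\<And>k idx. idx \<in> idxs (d k) n \<Longrightarrow> integrable (posM k) (\<lambda>s. h k s idx)"
    and fock_pair_bound: "\<And>k. norm (\<Sum>idx\<in>idxs (d k) n. \<integral>s. h k s idx \<partial>posM k) \<le> rterm n d f k + rterm n d g k"
    and fock_pair_summable_norm: "summable (\<lambda>k. norm (\<Sum>idx\<in>idxs (d k) n. \<integral>s. h k s idx \<partial>posM k))"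
    and fock_pair_summable: "summable (\<lambda>k. \<Sum>idx\<in>idxs (d k) n. \<integral>s. h k s idx \<partial>posM k)"
proof -
  have nnb: "(\<integral>\<^sup>+s. ennreal (norm (h k s idx)) \<partial>posM k) \<le>
      (\<integral>\<^sup>+s. ennreal ((norm (f k s idx))\<^sup>2) \<partial>posM k) + (\<integral>\<^sup>+s. ennreal ((norm (g k s idx))\<^sup>2) \<partial>posM k)"
    if idx: "idx \<in> idxs (d k) n" for k idx
  proof -
    have "(\<integral>\<^sup>+s. ennreal (norm (h k s idx)) \<partial>posM k) \<le>
        (\<integral>\<^sup>+s. ennreal ((norm (f k s idx))\<^sup>2) + ennreal ((norm (g k s idx))\<^sup>2) \<partial>posM k)"
    proof (rule nn_integral_mono)
      fix s assume s: "s \<in> space (posM k)"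
      have "norm (f k s idx) * norm (g k s idx) \<le> (norm (f k s idx))\<^sup>2 + (norm (g k s idx))\<^sup>2"
      proof -
        have "2 * norm (f k s idx) * norm (g k s idx) \<le> (norm (f k s idx))\<^sup>2 + (norm (g k s idx))\<^sup>2"
          by (rule sum_squares_bound)
        moreover have "0 \<le> norm (f k s idx) * norm (g k s idx)" by simp
        ultimately show ?thesis by linarith
      qed
      hence "norm (h k s idx) \<le> (norm (f k s idx))\<^sup>2 + (norm (g k s idx))\<^sup>2" using hb[OF idx s] by linarith
      thus "ennreal (norm (h k s idx)) \<le> ennreal ((norm (f k s idx))\<^sup>2) + ennreal ((norm (g k s idx))\<^sup>2)"
        using ennreal_plus[of "(norm (f k s idx))\<^sup>2" "(norm (g k s idx))\<^sup>2"] by (metis ennreal_leI zero_le_power2)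
    qed
    also have "\<dots> = (\<integral>\<^sup>+s. ennreal ((norm (f k s idx))\<^sup>2) \<partial>posM k) + (\<integral>\<^sup>+s. ennreal ((norm (g k s idx))\<^sup>2) \<partial>posM k)"
      by (rule nn_integral_add) (intro sq_meas fock_spaceD[OF f idx] fock_spaceD[OF g idx])+
    finally show ?thesis .
  qed
  show int: "integrable (posM k) (\<lambda>s. h k s idx)" if idx: "idx \<in> idxs (d k) n" for k idx
  proof (rule integrableI_bounded)
    show "(\<lambda>s. h k s idx) \<in> borel_measurable (posM k)" by (rule hm[OF idx])
    show "(\<integral>\<^sup>+s. ennreal (norm (h k s idx)) \<partial>posM k) < \<infinity>"
      using nnb[OF idx] term_fin[OF f idx] term_fin[OF g idx]
      by (simp add: order_le_less_trans)
  qed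
  show bound: "norm (\<Sum>idx\<in>idxs (d k) n. \<integral>s. h k s idx \<partial>posM k) \<le> rterm n d f k + rterm n d g k" for k
  proof -
    have "ennreal (norm (\<Sum>idx\<in>idxs (d k) n. \<integral>s. h k s idx \<partial>posM k)) \<le> ennreal (\<Sum>idx\<in>idxs (d k) n. norm (\<integral>s. h k s idx \<partial>posM k))"
      by (intro ennreal_leI norm_sum)
    also have "\<dots> = (\<Sum>idx\<in>idxs (d k) n. ennreal (norm (\<integral>s. h k s idx \<partial>posM k)))"
      by (simp add: sum_ennreal)
    also have "\<dots> \<le> (\<Sum>idx\<in>idxs (d k) n. (\<integral>\<^sup>+s. ennreal ((norm (f k s idx))\<^sup>2) \<partial>posM k) + (\<integral>\<^sup>+s. ennreal ((norm (g k s idx))\<^sup>2) \<partial>posM k))"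
    proof (rule sum_mono)
      fix idx assume idx: "idx \<in> idxs (d k) n"
      show "ennreal (norm (\<integral>s. h k s idx \<partial>posM k)) \<le> (\<integral>\<^sup>+s. ennreal ((norm (f k s idx))\<^sup>2) \<partial>posM k) + (\<integral>\<^sup>+s. ennreal ((norm (g k s idx))\<^sup>2) \<partial>posM k)"
        using integral_norm_bound_ennreal[OF int[OF idx]] nnb[OF idx] by (rule order_trans)
    qed
    also have "\<dots> = fterm n d f k + fterm n d g k" by (simp add: fterm_def sum.distrib)
    also have "\<dots> = ennreal (rterm n d f k + rterm n d g k)"
      by (simp add: rterm_eq[OF f] rterm_eq[OF g] rterm_nonneg)
    finally have "ennreal (norm (\<Sum>idx\<in>idxs (d k) n. \<integral>s. h k s idx \<partial>posM k)) \<le> ennreal (rterm n d f k + rterm n d g k)" .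
    thus ?thesis using rterm_nonneg[of n d f k] rterm_nonneg[of n d g k] by (metis ennreal_le_iff add_nonneg_nonneg)
  qed
  show sn: "summable (\<lambda>k. norm (\<Sum>idx\<in>idxs (d k) n. \<integral>s. h k s idx \<partial>posM k))"
  proof (rule summable_comparison_test)
    show "\<exists>N. \<forall>k\<ge>N. norm (norm (\<Sum>idx\<in>idxs (d k) n. \<integral>s. h k s idx \<partial>posM k)) \<le> rterm n d f k + rterm n d g k"
      using bound by simp
    show "summable (\<lambda>k. rterm n d f k + rterm n d g k)"
      by (intro summable_add rterm_summable f g)
  qed
  show "summable (\<lambda>k. \<Sum>idx\<in>idxs (d k) n. \<integral>s. h k s idx \<partial>posM k)"
    by (rule summable_norm_cancel[OF sn])
qed


definition fint :: "nat \<Rightarrow> (nat \<Rightarrow> nat) \<Rightarrow> real fock \<Rightarrow> real" where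
  "fint n d h = (\<Sum>k. \<Sum>idx\<in>idxs (d k) n. \<integral>s. h k s idx \<partial>posM k)"

definition fok :: "nat \<Rightarrow> (nat \<Rightarrow> nat) \<Rightarrow> real fock \<Rightarrow> bool" where
  "fok n d h \<longleftrightarrow> (\<forall>k. \<forall>idx\<in>idxs (d k) n. integrable (posM k) (\<lambda>s. h k s idx))
      \<and> summable (\<lambda>k. \<Sum>idx\<in>idxs (d k) n. \<integral>s. h k s idx \<partial>posM k)"

lemma fok_mult:
  fixes f g :: "real fock"
  assumes f: "f \<in> fock_space n d" and g: "g \<in> fock_space n d"
  shows "fok n d (\<lambda>k s idx. f k s idx * g k s idx)"
proof -
  have hm: "(\<lambda>s. f k s idx * g k s idx) \<in> borel_measurable (posM k)" if "idx \<in> idxs (d k) n" for k idx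
    using fock_spaceD(1)[OF f that] fock_spaceD(1)[OF g that] by (rule borel_measurable_times)
  have hb: "norm (f k s idx * g k s idx) \<le> norm (f k s idx) * norm (g k s idx)" for k idx s
    by (simp add: abs_mult)
  show ?thesis unfolding fok_def
    using fock_pair_int[OF f g hm hb] fock_pair_summable[OF f g hm hb] by blast
qed

lemma fok_add:
  assumes "fok n d h1" "fok n d h2"
  shows "fok n d (\<lambda>k s idx. h1 k s idx + h2 k s idx)"
    and "fint n d (\<lambda>k s idx. h1 k s idx + h2 k s idx) = fint n d h1 + fint n d h2"
proof -
  have e: "(\<Sum>idx\<in>idxs (d k) n. \<integral>s. h1 k s idx + h2 k s idx \<partial>posM k)
     = (\<Sum>idx\<in>idxs (d k) n. \<integral>s. h1 k s idx \<partial>posM k) + (\<Sum>idx\<in>idxs (d k) n. \<integral>s. h2 k s idx \<partial>posM k)" for k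
    using assms unfolding fok_def by (simp add: sum.distrib)
  have sm: "summable (\<lambda>k. (\<Sum>idx\<in>idxs (d k) n. \<integral>s. h1 k s idx \<partial>posM k) + (\<Sum>idx\<in>idxs (d k) n. \<integral>s. h2 k s idx \<partial>posM k))"
    using assms unfolding fok_def by (intro summable_add) auto
  show "fok n d (\<lambda>k s idx. h1 k s idx + h2 k s idx)"
    using assms sm unfolding fok_def e by auto
  show "fint n d (\<lambda>k s idx. h1 k s idx + h2 k s idx) = fint n d h1 + fint n d h2"
    using assms unfolding fint_def e fok_def by (subst suminf_add) auto
qed

lemma fok_cmult:
  assumes "fok n d h"
  shows "fok n d (\<lambda>k s idx. c * h k s idx)"
    and "fint n d (\<lambda>k s idx. c * h k s idx) = c * fint n d h"
proof -
  have e: "(\<Sum>idx\<in>idxs (d k) n. \<integral>s. c * h k s idx \<partial>posM k)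
     = c * (\<Sum>idx\<in>idxs (d k) n. \<integral>s. h k s idx \<partial>posM k)" for k
    using assms unfolding fok_def by (simp add: sum_distrib_left)
  show "fok n d (\<lambda>k s idx. c * h k s idx)"
    using assms unfolding fok_def e by (auto intro: summable_mult)
  show "fint n d (\<lambda>k s idx. c * h k s idx) = c * fint n d h"
    using assms unfolding fint_def e fok_def by (simp add: suminf_mult)
qed

lemma fok_zero: "fok n d (\<lambda>k s idx. 0)" "fint n d (\<lambda>k s idx. 0) = 0"
  by (auto simp: fok_def fint_def)

lemma fok_sum:
  assumes "finite F" "\<And>e. e \<in> F \<Longrightarrow> fok n d (H e)"
  shows "fok n d (\<lambda>k s idx. \<Sum>e\<in>F. H e k s idx) \<and> fint n d (\<lambda>k s idx. \<Sum>e\<in>F. H e k s idx) = (\<Sum>e\<in>F. fint n d (H e))"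
  using assms
proof (induction F rule: finite_induct)
  case empty thus ?case using fok_zero by simp
next
  case (insert e F)
  have a: "fok n d (H e)" using insert by simp
  have b: "fok n d (\<lambda>k s idx. \<Sum>e\<in>F. H e k s idx)" and bi: "fint n d (\<lambda>k s idx. \<Sum>e\<in>F. H e k s idx) = (\<Sum>e\<in>F. fint n d (H e))"
    using insert by auto
  show ?case using fok_add[OF a b] bi insert(1,2) by simp
qed

lemma fint_nonneg: "fok n d h \<Longrightarrow> (\<And>k s idx. 0 \<le> h k s idx) \<Longrightarrow> 0 \<le> fint n d h"
  unfolding fok_def fint_def
  by (intro suminf_nonneg sum_nonneg Bochner_Integration.integral_nonneg) auto

lemma fock_inner_fint: "fock_inner n d f g = fint n d (\<lambda>k s idx. f k s idx * g k s idx)"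
  by (simp add: fock_inner_def fint_def)

lemma fock_inner_self:
  fixes f :: "real fock"
  assumes f: "f \<in> fock_space n d"
  shows "fock_inner n d f f = fock_norm n d f ^ 2"
proof -
  have ok: "fok n d (\<lambda>k s idx. f k s idx * f k s idx)" by (rule fok_mult[OF f f])
  have r: "rterm n d f k = (\<Sum>idx\<in>idxs (d k) n. \<integral>s. f k s idx * f k s idx \<partial>posM k)" for k
  proof -
    have "fterm n d f k = (\<Sum>idx\<in>idxs (d k) n. ennreal (\<integral>s. f k s idx * f k s idx \<partial>posM k))"
      unfolding fterm_def
    proof (intro sum.cong refl)
      fix idx assume idx: "idx \<in> idxs (d k) n"
      have "(\<integral>\<^sup>+ s. ennreal ((norm (f k s idx))\<^sup>2) \<partial>posM k) = (\<integral>\<^sup>+ s. ennreal (f k s idx * f k s idx) \<partial>posM k)"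
        by (simp add: power2_eq_square)
      also have "\<dots> = ennreal (\<integral>s. f k s idx * f k s idx \<partial>posM k)"
        using ok idx unfolding fok_def by (intro nn_integral_eq_integral) auto
      finally show "(\<integral>\<^sup>+ s. ennreal ((norm (f k s idx))\<^sup>2) \<partial>posM k) = ennreal (\<integral>s. f k s idx * f k s idx \<partial>posM k)" .
    qed
    also have "\<dots> = ennreal (\<Sum>idx\<in>idxs (d k) n. \<integral>s. f k s idx * f k s idx \<partial>posM k)"
      by (intro sum_ennreal) auto
    finally show ?thesis unfolding rterm_def
      by (simp add: sum_nonneg)
  qed
  show ?thesis unfolding fock_norm_sq[OF f] fock_inner_fint fint_def r ..
qed

lemma fock_bessel:
  fixes a :: "real fock" and F :: "real fock set"
  assumes fin: "finite F" and Fsp: "F \<subseteq> fock_space n d" and a: "a \<in> fock_space n d"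
    and one: "\<And>e. e \<in> F \<Longrightarrow> fock_inner n d e e = 1"
    and orth: "\<And>e e'. e \<in> F \<Longrightarrow> e' \<in> F \<Longrightarrow> e \<noteq> e' \<Longrightarrow> fock_inner n d e e' = 0"
  shows "(\<Sum>e\<in>F. (fock_inner n d e a)^2) \<le> fock_norm n d a ^ 2"
proof -
  define c where "c e = fock_inner n d e a" for e
  define H1 where "H1 = (\<lambda>k s idx. a k s idx * a k s idx)"
  define H2 where "H2 = (\<lambda>k s idx. (-2) * (\<Sum>e\<in>F. c e * (e k s idx * a k s idx)))"
  define H3 where "H3 = (\<lambda>k s idx. \<Sum>e\<in>F. \<Sum>e'\<in>F. (c e * c e') * (e k s idx * e' k s idx))"
  have eF: "e \<in> fock_space n d" if "e \<in> F" for e using Fsp that by blast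
  have ok1: "fok n d H1" unfolding H1_def by (rule fok_mult[OF a a])
  have i1: "fint n d H1 = fock_norm n d a ^ 2" unfolding H1_def
    using fock_inner_self[OF a] by (simp add: fock_inner_fint)
  have s2: "fok n d (\<lambda>k s idx. \<Sum>e\<in>F. c e * (e k s idx * a k s idx))
      \<and> fint n d (\<lambda>k s idx. \<Sum>e\<in>F. c e * (e k s idx * a k s idx)) = (\<Sum>e\<in>F. fint n d (\<lambda>k s idx. c e * (e k s idx * a k s idx)))"
    by (rule fok_sum[OF fin]) (rule fok_cmult(1)[OF fok_mult[OF eF a]])
  have ok2: "fok n d H2" unfolding H2_def by (rule fok_cmult(1)[OF conjunct1[OF s2]])
  have i2: "fint n d H2 = -2 * (\<Sum>e\<in>F. (c e)^2)"
  proof -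
    have "fint n d H2 = -2 * fint n d (\<lambda>k s idx. \<Sum>e\<in>F. c e * (e k s idx * a k s idx))"
      unfolding H2_def by (rule fok_cmult(2)[OF conjunct1[OF s2]])
    also have "\<dots> = -2 * (\<Sum>e\<in>F. fint n d (\<lambda>k s idx. c e * (e k s idx * a k s idx)))"
      using conjunct2[OF s2] by simp
    also have "(\<Sum>e\<in>F. fint n d (\<lambda>k s idx. c e * (e k s idx * a k s idx))) = (\<Sum>e\<in>F. (c e)^2)"
    proof (intro sum.cong refl)
      fix e assume e: "e \<in> F"
      have "fint n d (\<lambda>k s idx. c e * (e k s idx * a k s idx)) = c e * fint n d (\<lambda>k s idx. e k s idx * a k s idx)"
        by (rule fok_cmult(2)[OF fok_mult[OF eF[OF e] a]])
      also have "fint n d (\<lambda>k s idx. e k s idx * a k s idx) = c e" by (simp add: c_def fock_inner_fint)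
      finally show "fint n d (\<lambda>k s idx. c e * (e k s idx * a k s idx)) = (c e)^2" by (simp add: power2_eq_square)
    qed
    finally show ?thesis .
  qed
  have s3: "fok n d H3 \<and> fint n d H3 = (\<Sum>e\<in>F. fint n d (\<lambda>k s idx. \<Sum>e'\<in>F. (c e * c e') * (e k s idx * e' k s idx)))"
    unfolding H3_def
  proof (rule fok_sum[OF fin])
    fix e assume e: "e \<in> F"
    show "fok n d (\<lambda>k s idx. \<Sum>e'\<in>F. (c e * c e') * (e k s idx * e' k s idx))"
      using fok_sum[OF fin, where H = "\<lambda>e' k s idx. (c e * c e') * (e k s idx * e' k s idx)"]
        fok_cmult(1)[OF fok_mult[OF eF[OF e] eF]] by blast
  qed
  have i3: "fint n d H3 = (\<Sum>e\<in>F. (c e)^2)"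
  proof -
    have "fint n d H3 = (\<Sum>e\<in>F. fint n d (\<lambda>k s idx. \<Sum>e'\<in>F. (c e * c e') * (e k s idx * e' k s idx)))"
      using s3 by blast
    also have "\<dots> = (\<Sum>e\<in>F. (c e)^2)"
    proof (intro sum.cong refl)
      fix e assume e: "e \<in> F"
      have "fint n d (\<lambda>k s idx. \<Sum>e'\<in>F. (c e * c e') * (e k s idx * e' k s idx))
          = (\<Sum>e'\<in>F. fint n d (\<lambda>k s idx. (c e * c e') * (e k s idx * e' k s idx)))"
        using fok_sum[OF fin, where H = "\<lambda>e' k s idx. (c e * c e') * (e k s idx * e' k s idx)"]
          fok_cmult(1)[OF fok_mult[OF eF[OF e] eF]] by blast
      also have "\<dots> = (\<Sum>e'\<in>F. (c e * c e') * fock_inner n d e e')"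
        using fok_cmult(2)[OF fok_mult[OF eF[OF e] eF]] by (simp add: fock_inner_fint)
      also have "\<dots> = (\<Sum>e'\<in>{e}. (c e * c e') * fock_inner n d e e')"
        using e fin orth[OF e] by (intro sum.mono_neutral_right) auto
      also have "\<dots> = (c e)^2" using one[OF e] by (simp add: power2_eq_square)
      finally show "fint n d (\<lambda>k s idx. \<Sum>e'\<in>F. (c e * c e') * (e k s idx * e' k s idx)) = (c e)^2" .
    qed
    finally show ?thesis .
  qed
  have ok12: "fok n d (\<lambda>k s idx. H1 k s idx + H2 k s idx)" by (rule fok_add(1)[OF ok1 ok2])
  have ok123: "fok n d (\<lambda>k s idx. (H1 k s idx + H2 k s idx) + H3 k s idx)"
    by (rule fok_add(1)[OF ok12 conjunct1[OF s3]])
  have i123: "fint n d (\<lambda>k s idx. (H1 k s idx + H2 k s idx) + H3 k s idx) = fock_norm n d a ^ 2 - (\<Sum>e\<in>F. (c e)^2)"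
    using fok_add(2)[OF ok12 conjunct1[OF s3]] fok_add(2)[OF ok1 ok2] i1 i2 i3 by simp
  have sq: "(H1 k s idx + H2 k s idx) + H3 k s idx = (a k s idx - (\<Sum>e\<in>F. c e * e k s idx))^2" for k s idx
  proof -
    define S where "S = (\<Sum>e\<in>F. c e * e k s idx)"
    define A where "A = a k s idx"
    have h2: "(\<Sum>e\<in>F. c e * (e k s idx * a k s idx)) = A * S"
      unfolding S_def A_def sum_distrib_left by (intro sum.cong refl) (simp add: algebra_simps)
    have "S * S = (\<Sum>e\<in>F. \<Sum>e'\<in>F. (c e * e k s idx) * (c e' * e' k s idx))"
      unfolding S_def by (rule sum_product)
    also have "\<dots> = (\<Sum>e\<in>F. \<Sum>e'\<in>F. (c e * c e') * (e k s idx * e' k s idx))"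
      by (intro sum.cong refl) (simp add: algebra_simps)
    finally have h3: "(\<Sum>e\<in>F. \<Sum>e'\<in>F. (c e * c e') * (e k s idx * e' k s idx)) = S * S" by simp
    have "(H1 k s idx + H2 k s idx) + H3 k s idx = A * A + (-2) * (A * S) + S * S"
      unfolding H1_def H2_def H3_def h2 h3 A_def by simp
    also have "\<dots> = (A - S)^2" by (simp add: power2_eq_square algebra_simps)
    finally show ?thesis by (simp add: A_def S_def)
  qed
  have "0 \<le> fint n d (\<lambda>k s idx. (H1 k s idx + H2 k s idx) + H3 k s idx)"
    by (rule fint_nonneg[OF ok123]) (simp add: sq)
  thus ?thesis using i123 by (simp add: c_def)
qed


lemma idxs_lt: "idx \<in> idxs k n \<Longrightarrow> j < k \<Longrightarrow> idx j < n"
  by (auto simp: idxs_def PiE_def Pi_def)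

lemma idxs_Suc_tail: "idx \<in> idxs (Suc k) n \<Longrightarrow> (\<lambda>i. idx (Suc i)) \<in> idxs k n"
  by (auto simp: idxs_def PiE_def Pi_def extensional_def)

lemma idxs_Suc_bij: "bij_betw (\<lambda>(j, f). case_nat j f) ({..<n} \<times> idxs k n) (idxs (Suc k) n)"
proof (rule bij_betwI[where g = "\<lambda>idx. (idx 0, \<lambda>i. idx (Suc i))"])
  show "(\<lambda>(j, f). case_nat j f) \<in> {..<n} \<times> idxs k n \<rightarrow> idxs (Suc k) n"
  proof
    fix p assume p: "p \<in> {..<n} \<times> idxs k n"
    obtain j f where pj: "p = (j, f)" by fastforce
    have "case_nat j f \<in> idxs (Suc k) n"
      using p unfolding pj idxs_def PiE_def Pi_def extensional_def
      by (auto split: nat.splits)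
    thus "(case p of (j, f) \<Rightarrow> case_nat j f) \<in> idxs (Suc k) n" by (simp add: pj)
  qed
  show "(\<lambda>idx. (idx 0, \<lambda>i. idx (Suc i))) \<in> idxs (Suc k) n \<rightarrow> {..<n} \<times> idxs k n"
    using idxs_lt idxs_Suc_tail by fastforce
  show "(\<lambda>idx. (idx 0, \<lambda>i. idx (Suc i))) (case x of (j, f) \<Rightarrow> case_nat j f) = x" for x
    by (cases x) auto
  show "(case (y 0, \<lambda>i. y (Suc i)) of (j, f) \<Rightarrow> case_nat j f) = y" for y
    by (auto simp: fun_eq_iff split: nat.splits)
qed

lemma idxs_Suc_sum:
  fixes h :: "(nat \<Rightarrow> nat) \<Rightarrow> 'a::comm_monoid_add"
  shows "(\<Sum>idx\<in>idxs (Suc k) n. h idx) = (\<Sum>j<n. \<Sum>f\<in>idxs k n. h (case_nat j f))"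
proof -
  have "(\<Sum>idx\<in>idxs (Suc k) n. h idx) = (\<Sum>p\<in>{..<n} \<times> idxs k n. h ((\<lambda>(j, f). case_nat j f) p))"
    by (rule sum.reindex_bij_betw[OF idxs_Suc_bij, symmetric])
  also have "\<dots> = (\<Sum>j<n. \<Sum>f\<in>idxs k n. h (case_nat j f))"
    by (simp add: sum.cartesian_product split_def)
  finally show ?thesis .
qed

lemma fock_norm2_le_scale:
  fixes f :: "'a::real_normed_vector fock" and g :: "'b::real_normed_vector fock"
  assumes g: "g \<in> fock_space n d" and c: "0 \<le> c"
    and le: "\<And>k idx s. idx \<in> idxs (d k) n \<Longrightarrow> s \<in> space (posM k) \<Longrightarrow> norm (f k s idx) \<le> c * norm (g k s idx)"
  shows "fock_norm2 n d f \<le> ennreal (c^2) * fock_norm2 n d g"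
proof -
  have "fterm n d f k \<le> ennreal (c^2) * fterm n d g k" for k
  proof -
    have "fterm n d f k \<le> (\<Sum>idx\<in>idxs (d k) n. \<integral>\<^sup>+ s. ennreal (c^2) * ennreal ((norm (g k s idx))\<^sup>2) \<partial>posM k)"
      unfolding fterm_def
    proof (intro sum_mono nn_integral_mono)
      fix idx s assume idx: "idx \<in> idxs (d k) n" and s: "s \<in> space (posM k)"
      have "(norm (f k s idx))\<^sup>2 \<le> (c * norm (g k s idx))\<^sup>2" using le[OF idx s] by (intro power_mono) auto
      thus "ennreal ((norm (f k s idx))\<^sup>2) \<le> ennreal (c^2) * ennreal ((norm (g k s idx))\<^sup>2)"
        by (simp add: ennreal_mult[symmetric] power_mult_distrib)
    qed
    also have "\<dots> = (\<Sum>idx\<in>idxs (d k) n. ennreal (c^2) * \<integral>\<^sup>+ s. ennreal ((norm (g k s idx))\<^sup>2) \<partial>posM k)"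
      by (intro sum.cong refl nn_integral_cmult sq_meas fock_spaceD(1)[OF g]) auto
    also have "\<dots> = ennreal (c^2) * fterm n d g k" by (simp add: fterm_def sum_distrib_left)
    finally show ?thesis .
  qed
  hence "(\<Sum>k. fterm n d f k) \<le> (\<Sum>k. ennreal (c^2) * fterm n d g k)" by (intro suminf_le) auto
  thus ?thesis by (simp add: fock_norm2_fterm)
qed

lemma fock_space_le:
  fixes f :: "'a::real_normed_vector fock" and g :: "'b::real_normed_vector fock"
  assumes g: "g \<in> fock_space n d" and c: "0 \<le> c"
    and le: "\<And>k idx s. idx \<in> idxs (d k) n \<Longrightarrow> s \<in> space (posM k) \<Longrightarrow> norm (f k s idx) \<le> c * norm (g k s idx)"
    and m: "\<And>k idx. idx \<in> idxs (d k) n \<Longrightarrow> (\<lambda>s. f k s idx) \<in> borel_measurable (posM k)"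
  shows "f \<in> fock_space n d"
proof -
  have "fock_norm2 n d f \<le> ennreal (c^2) * fock_norm2 n d g" by (rule fock_norm2_le_scale[OF g c le])
  also have "\<dots> < \<infinity>" using g by (simp add: fock_space_def ennreal_mult_less_top)
  finally show ?thesis using m by (simp add: fock_space_def)
qed

definition inner_fock :: "'a::real_inner fock \<Rightarrow> 'a \<Rightarrow> real fock" where
  "inner_fock g u = (\<lambda>k s idx. inner (g k s idx) u)"

lemma inner_fock_space:
  fixes g :: "'a::{real_inner,second_countable_topology} fock"
  assumes g: "g \<in> fock_space n d"
  shows "inner_fock g u \<in> fock_space n d"
proof (rule fock_space_le[OF g, of "norm u"])
  fix k idx s
  show "norm (inner_fock g u k s idx) \<le> norm u * norm (g k s idx)"
    using Cauchy_Schwarz_ineq2[of "g k s idx" u] by (simp add: inner_fock_def mult.commute)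
next
  fix k idx assume "idx \<in> idxs (d k) n"
  thus "(\<lambda>s. inner_fock g u k s idx) \<in> borel_measurable (posM k)"
    unfolding inner_fock_def using fock_spaceD(1)[OF g] by (intro borel_measurable_inner) auto
qed simp

lemma inner_fock_bessel:
  fixes g :: "'a::{real_inner, banach, second_countable_topology} fock"
  assumes g: "g \<in> fock_space n d" and u: "onz u M"
  shows "(\<Sum>m<M. fock_norm2 n d (inner_fock g (u m))) \<le> fock_norm2 n d g"
proof -
  have mg: "(\<lambda>s. g k s idx) \<in> borel_measurable (posM k)" if "idx \<in> idxs (d k) n" for k idx
    using fock_spaceD(1)[OF g that] .
  have "(\<Sum>m<M. fock_norm2 n d (inner_fock g (u m))) = (\<Sum>m<M. \<Sum>k. fterm n d (inner_fock g (u m)) k)"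
    by (simp add: fock_norm2_fterm)
  also have "\<dots> = (\<Sum>k. \<Sum>m<M. fterm n d (inner_fock g (u m)) k)"
    by (rule suminf_sum[symmetric]) auto
  also have "\<dots> \<le> (\<Sum>k. fterm n d g k)"
  proof (intro suminf_le allI)
    fix k
    have "(\<Sum>m<M. fterm n d (inner_fock g (u m)) k)
        = (\<Sum>idx\<in>idxs (d k) n. \<integral>\<^sup>+ s. (\<Sum>m<M. ennreal ((norm (inner (g k s idx) (u m)))\<^sup>2)) \<partial>posM k)"
      unfolding fterm_def inner_fock_def
      by (subst sum.swap) (intro sum.cong refl nn_integral_sum[symmetric] sq_meas borel_measurable_inner mg measurable_const, auto)
    also have "\<dots> \<le> fterm n d g k"
      unfolding fterm_def
    proof (intro sum_mono nn_integral_mono)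
      fix idx s
      have "(\<Sum>m<M. (inner (g k s idx) (u m))\<^sup>2) \<le> (norm (g k s idx))\<^sup>2"
        using onz_pythag[OF u, of "g k s idx"] by simp
      thus "(\<Sum>m<M. ennreal ((norm (inner (g k s idx) (u m)))\<^sup>2)) \<le> ennreal ((norm (g k s idx))\<^sup>2)"
        by (simp add: sum_ennreal)
    qed
    finally show "(\<Sum>m<M. fterm n d (inner_fock g (u m)) k) \<le> fterm n d g k" .
  qed auto
  finally show ?thesis by (simp add: fock_norm2_fterm)
qed

definition kpair :: "nat \<Rightarrow> real fock \<Rightarrow> 'x::{real_normed_vector,second_countable_topology,banach} fock \<Rightarrow> 'x" where
  "kpair n f g = (\<Sum>k. \<integral>s. (\<Sum>idx\<in>idxs (Suc k) n. f k s idx *\<^sub>R g k s idx) \<partial>posM k)"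

lemma kpair_facts:
  fixes f :: "real fock" and g :: "'x::{real_normed_vector,second_countable_topology,banach} fock"
  assumes f: "f \<in> fock_space n Suc" and g: "g \<in> fock_space n Suc"
  shows "\<And>k idx. idx \<in> idxs (Suc k) n \<Longrightarrow> integrable (posM k) (\<lambda>s. f k s idx *\<^sub>R g k s idx)"
    and "\<And>k. (\<integral>s. (\<Sum>idx\<in>idxs (Suc k) n. f k s idx *\<^sub>R g k s idx) \<partial>posM k) = (\<Sum>idx\<in>idxs (Suc k) n. \<integral>s. f k s idx *\<^sub>R g k s idx \<partial>posM k)"
    and "summable (\<lambda>k. \<integral>s. (\<Sum>idx\<in>idxs (Suc k) n. f k s idx *\<^sub>R g k s idx) \<partial>posM k)"
proof -
  have hm: "(\<lambda>s. f k s idx *\<^sub>R g k s idx) \<in> borel_measurable (posM k)" if "idx \<in> idxs (Suc k) n" for k idx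
    using fock_spaceD(1)[OF f that] fock_spaceD(1)[OF g that] by (rule borel_measurable_scaleR)
  have hb: "norm (f k s idx *\<^sub>R g k s idx) \<le> norm (f k s idx) * norm (g k s idx)" for k idx s
    by simp
  note I = fock_pair_int[OF f g hm hb] and S = fock_pair_summable[OF f g hm hb]
  show "\<And>k idx. idx \<in> idxs (Suc k) n \<Longrightarrow> integrable (posM k) (\<lambda>s. f k s idx *\<^sub>R g k s idx)" by (rule I)
  show e: "(\<integral>s. (\<Sum>idx\<in>idxs (Suc k) n. f k s idx *\<^sub>R g k s idx) \<partial>posM k) = (\<Sum>idx\<in>idxs (Suc k) n. \<integral>s. f k s idx *\<^sub>R g k s idx \<partial>posM k)" for k
    by (rule Bochner_Integration.integral_sum) (rule I)
  show "summable (\<lambda>k. \<integral>s. (\<Sum>idx\<in>idxs (Suc k) n. f k s idx *\<^sub>R g k s idx) \<partial>posM k)"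
    unfolding e by (rule S)
qed

lemma kpair_diff:
  fixes f :: "real fock" and g1 g2 g3 :: "'x::{real_normed_vector,second_countable_topology,banach} fock"
  assumes f: "f \<in> fock_space n Suc" and g1: "g1 \<in> fock_space n Suc" and g2: "g2 \<in> fock_space n Suc"
    and e3: "\<And>k idx s. idx \<in> idxs (Suc k) n \<Longrightarrow> s \<in> space (posM k) \<Longrightarrow> g3 k s idx = g1 k s idx - g2 k s idx"
  shows "kpair n f g1 - kpair n f g2 = kpair n f g3"
proof -
  note F1 = kpair_facts[OF f g1] and F2 = kpair_facts[OF f g2]
  have "kpair n f g1 - kpair n f g2 = (\<Sum>k. (\<integral>s. (\<Sum>idx\<in>idxs (Suc k) n. f k s idx *\<^sub>R g1 k s idx) \<partial>posM k)
        - (\<integral>s. (\<Sum>idx\<in>idxs (Suc k) n. f k s idx *\<^sub>R g2 k s idx) \<partial>posM k))"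
    unfolding kpair_def by (rule suminf_diff[OF F1(3) F2(3)])
  also have "\<dots> = kpair n f g3"
    unfolding kpair_def
  proof (intro arg_cong[where f = suminf] ext)
    fix k
    have "(\<integral>s. (\<Sum>idx\<in>idxs (Suc k) n. f k s idx *\<^sub>R g1 k s idx) \<partial>posM k)
        - (\<integral>s. (\<Sum>idx\<in>idxs (Suc k) n. f k s idx *\<^sub>R g2 k s idx) \<partial>posM k)
      = (\<integral>s. (\<Sum>idx\<in>idxs (Suc k) n. f k s idx *\<^sub>R g1 k s idx) - (\<Sum>idx\<in>idxs (Suc k) n. f k s idx *\<^sub>R g2 k s idx) \<partial>posM k)"
    proof -
      have i1: "integrable (posM k) (\<lambda>s. \<Sum>idx\<in>idxs (Suc k) n. f k s idx *\<^sub>R g1 k s idx)"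
        by (rule Bochner_Integration.integrable_sum, rule F1(1))
      have i2: "integrable (posM k) (\<lambda>s. \<Sum>idx\<in>idxs (Suc k) n. f k s idx *\<^sub>R g2 k s idx)"
        by (rule Bochner_Integration.integrable_sum, rule F2(1))
      show ?thesis by (rule Bochner_Integration.integral_diff[OF i1 i2, symmetric])
    qed
    also have "\<dots> = (\<integral>s. (\<Sum>idx\<in>idxs (Suc k) n. f k s idx *\<^sub>R g3 k s idx) \<partial>posM k)"
      by (intro Bochner_Integration.integral_cong refl)
         (simp add: e3 sum_subtractf[symmetric] scaleR_diff_right)
    finally show "(\<integral>s. (\<Sum>idx\<in>idxs (Suc k) n. f k s idx *\<^sub>R g1 k s idx) \<partial>posM k)
        - (\<integral>s. (\<Sum>idx\<in>idxs (Suc k) n. f k s idx *\<^sub>R g2 k s idx) \<partial>posM k)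
        = (\<integral>s. (\<Sum>idx\<in>idxs (Suc k) n. f k s idx *\<^sub>R g3 k s idx) \<partial>posM k)" .
  qed
  finally show ?thesis .
qed

lemma kpair_inner:
  fixes f :: "real fock" and g :: "'x::{real_inner,second_countable_topology,banach} fock"
  assumes f: "f \<in> fock_space n Suc" and g: "g \<in> fock_space n Suc"
  shows "inner (kpair n f g) u = fock_inner n Suc f (inner_fock g u)"
proof -
  note F = kpair_facts[OF f g]
  have "inner (kpair n f g) u = (\<Sum>k. inner (\<integral>s. (\<Sum>idx\<in>idxs (Suc k) n. f k s idx *\<^sub>R g k s idx) \<partial>posM k) u)"
    unfolding kpair_def by (rule bounded_linear.suminf[OF bounded_linear_inner_left F(3)])
  also have "\<dots> = fock_inner n Suc f (inner_fock g u)"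
    unfolding fock_inner_def
  proof (intro arg_cong[where f = suminf] ext)
    fix k
    have "inner (\<integral>s. (\<Sum>idx\<in>idxs (Suc k) n. f k s idx *\<^sub>R g k s idx) \<partial>posM k) u
        = inner (\<Sum>idx\<in>idxs (Suc k) n. \<integral>s. f k s idx *\<^sub>R g k s idx \<partial>posM k) u" by (simp only: F(2))
    also have "\<dots> = (\<Sum>idx\<in>idxs (Suc k) n. inner (\<integral>s. f k s idx *\<^sub>R g k s idx \<partial>posM k) u)"
      by (simp add: inner_sum_left)
    also have "\<dots> = (\<Sum>idx\<in>idxs (Suc k) n. \<integral>s. inner (f k s idx) (inner_fock g u k s idx) \<partial>posM k)"
    proof (intro sum.cong refl)
      fix idx assume idx: "idx \<in> idxs (Suc k) n"
      have "inner (\<integral>s. f k s idx *\<^sub>R g k s idx \<partial>posM k) u = (\<integral>s. inner (f k s idx *\<^sub>R g k s idx) u \<partial>posM k)"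
        by (rule integral_inner_left[symmetric]) (rule F(1)[OF idx])
      also have "\<dots> = (\<integral>s. inner (f k s idx) (inner_fock g u k s idx) \<partial>posM k)"
        by (simp add: inner_fock_def)
      finally show "inner (\<integral>s. f k s idx *\<^sub>R g k s idx \<partial>posM k) u = (\<integral>s. inner (f k s idx) (inner_fock g u k s idx) \<partial>posM k)" .
    qed
    finally show "inner (\<integral>s. (\<Sum>idx\<in>idxs (Suc k) n. f k s idx *\<^sub>R g k s idx) \<partial>posM k) u
        = (\<Sum>idx\<in>idxs (Suc k) n. \<integral>s. inner (f k s idx) (inner_fock g u k s idx) \<partial>posM k)" .
  qed
  finally show ?thesis .
qed


locale sgfull = sgsys2 T N n M \<nu>
  for T :: "real \<Rightarrow> 'x::{real_inner, banach, second_countable_topology} \<Rightarrow> 'x"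
    and N n M \<nu> +
  fixes C :: "'x \<Rightarrow> 'h::{real_inner, banach, second_countable_topology}"
  assumes C_lin: "bounded_linear C"
begin

definition "cW = cc * (onorm C)^2"

lemma cW_nonneg: "0 \<le> cW" using cc_pos by (simp add: cW_def)

lemma space_nonneg: "s \<in> space (posM k) \<Longrightarrow> \<forall>j\<le>k. 0 \<le> s j"
  using posM_pos less_imp_le by blast

lemma oc_bl: "s \<in> space (posM k) \<Longrightarrow> idx \<in> idxs k n \<Longrightarrow> bounded_linear (\<lambda>x. C (obs_chain T N k s idx x))"
  by (rule bounded_linear_compose[OF C_lin obs_bl]) (auto simp: space_nonneg idxs_lt)

lemma obsW_meas: "idx \<in> idxs k n \<Longrightarrow> (\<lambda>s. obsW T N C x k s idx) \<in> borel_measurable (posM k)"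
  unfolding obsW_def
  by (rule meas_bl[OF obs_meas[OF le_refl _ measurable_const] C_lin]) (auto simp: idxs_lt)

lemma obsW_fterm: "fterm n (\<lambda>k. k) (obsW T N C x) k \<le> ennreal (aa * (aa*GG)^k * (norm x ^ 2 * onorm C ^ 2))"
proof -
  have "fterm n (\<lambda>k. k) (obsW T N C x) k = (\<Sum>idx\<in>idxs k n. \<integral>\<^sup>+s. ennreal ((norm (C (obs_chain T N k s idx x)))\<^sup>2) \<partial>posM k)"
    by (simp add: fterm_def obsW_def)
  also have "\<dots> \<le> ennreal (aa * (aa * GG) ^ k * norm x ^ 2 * (onorm C)^2)"
  proof (rule chain_sum_bound)
    show "0 \<le> onorm C" by (rule onorm_pos_le[OF C_lin])
    fix idx s assume idx: "idx \<in> idxs k n" and s: "s \<in> space (posM k)"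
    have "norm (C (obs_chain T N k s idx x)) \<le> onorm C * norm (obs_chain T N k s idx x)" by (rule onorm[OF C_lin])
    also have "\<dots> \<le> onorm C * ((\<Prod>j\<le>k. M * exp (- \<nu> * s j)) * (\<Prod>j<k. onorm (N (idx j))) * norm x)"
      using idx s by (intro mult_left_mono obs_norm onorm_pos_le[OF C_lin]) (auto simp: space_nonneg idxs_lt)
    finally show "norm (C (obs_chain T N k s idx x)) \<le> (\<Prod>j\<le>k. M * exp (- \<nu> * s j)) * (\<Prod>j<k. onorm (N (idx j))) * norm x * onorm C"
      by (simp add: algebra_simps)
  qed
  finally show ?thesis by (simp add: mult.assoc)
qed

lemma obsW_norm2: "fock_norm2 n (\<lambda>k. k) (obsW T N C x) \<le> ennreal (cW * norm x ^ 2)"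
proof -
  have "fock_norm2 n (\<lambda>k. k) (obsW T N C x) \<le> (\<Sum>k. ennreal (aa * (aa*GG)^k * (norm x ^ 2 * onorm C ^ 2)))"
    unfolding fock_norm2_fterm by (intro suminf_le obsW_fterm) auto
  also have "\<dots> = ennreal (cc * (norm x ^ 2 * onorm C ^ 2))" by (rule geo_sum) simp
  finally show ?thesis by (simp add: cW_def algebra_simps)
qed

lemma obsW_space: "obsW T N C x \<in> fock_space n (\<lambda>k. k)"
  unfolding fock_space_def using obsW_meas obsW_norm2[of x]
  by (auto simp: order_le_less_trans)

lemma obsW_norm: "fock_norm n (\<lambda>k. k) (obsW T N C x) \<le> sqrt cW * norm x"
proof -
  have "enn2real (fock_norm2 n (\<lambda>k. k) (obsW T N C x)) \<le> cW * norm x ^ 2"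
    using obsW_norm2 cW_nonneg by (intro enn2real_leI) auto
  hence "fock_norm n (\<lambda>k. k) (obsW T N C x) \<le> sqrt (cW * norm x ^ 2)"
    by (simp add: fock_norm_def)
  also have "\<dots> = sqrt cW * norm x" by (simp add: real_sqrt_mult)
  finally show ?thesis .
qed

lemma obsW_zero: "fock_norm n (\<lambda>k. k) (obsW T N C 0) = 0"
proof -
  have "fock_eq n (\<lambda>k. k) (obsW T N C 0) (\<lambda>k s idx. 0)"
    unfolding fock_eq_def obsW_def
  proof (intro allI ballI)
    fix k idx s assume "idx \<in> idxs k n" "s \<in> space (posM k)"
    thus "C (obs_chain T N k s idx 0) = 0"
      using linear_0[OF bounded_linear.linear[OF oc_bl]] by simp
  qed
  hence "fock_norm n (\<lambda>k. k) (obsW T N C 0) = fock_norm n (\<lambda>k. k) (\<lambda>k s idx. 0 :: 'h)" by (rule fock_norm_cong)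
  thus ?thesis by (simp add: fock_norm_def fock_norm2_def)
qed

definition rk :: "(nat \<Rightarrow> 'x) \<Rightarrow> 'x fock" where
  "rk \<phi> = (\<lambda>k s idx. reach_chain T N k s (\<lambda>i. idx (Suc i)) (\<phi> (idx 0)))"

lemma rk_meas: "idx \<in> idxs (Suc k) n \<Longrightarrow> (\<lambda>s. rk \<phi> k s idx) \<in> borel_measurable (posM k)"
  unfolding rk_def by (rule reach_meas[OF le_refl]) (auto dest: idxs_Suc_tail simp: idxs_lt)

lemma rk_fterm: "fterm n Suc (rk \<phi>) k \<le> ennreal (aa * (aa*GG)^k * (\<Sum>j<n. norm (\<phi> j) ^ 2))"
proof -
  have "fterm n Suc (rk \<phi>) k = (\<Sum>j<n. \<Sum>f\<in>idxs k n. \<integral>\<^sup>+s. ennreal ((norm (reach_chain T N k s f (\<phi> j)))\<^sup>2) \<partial>posM k)"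
    unfolding fterm_def by (subst idxs_Suc_sum) (simp add: rk_def)
  also have "\<dots> \<le> (\<Sum>j<n. ennreal (aa * (aa * GG) ^ k * norm (\<phi> j) ^ 2 * 1^2))"
  proof (intro sum_mono chain_sum_bound)
    fix j f s assume f: "f \<in> idxs k n" and s: "s \<in> space (posM k)"
    show "norm (reach_chain T N k s f (\<phi> j)) \<le> (\<Prod>j\<le>k. M * exp (- \<nu> * s j)) * (\<Prod>j<k. onorm (N (f j))) * norm (\<phi> j) * 1"
      using reach_norm[of k s f "\<phi> j"] f s by (auto simp: space_nonneg idxs_lt)
  qed simp
  also have "\<dots> = ennreal (\<Sum>j<n. aa * (aa * GG) ^ k * norm (\<phi> j) ^ 2)"
  proof -
    have nn: "\<And>j. 0 \<le> aa * (aa*GG)^k * norm (\<phi> j)^2" using aa_pos GG_nonneg by auto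
    show ?thesis by (simp add: nn)
  qed
  also have "(\<Sum>j<n. aa * (aa * GG) ^ k * norm (\<phi> j) ^ 2) = aa * (aa*GG)^k * (\<Sum>j<n. norm (\<phi> j) ^ 2)"
    by (simp add: sum_distrib_left)
  finally show ?thesis .
qed

lemma rk_norm2: "fock_norm2 n Suc (rk \<phi>) \<le> ennreal (cc * (\<Sum>j<n. norm (\<phi> j) ^ 2))"
proof -
  have "fock_norm2 n Suc (rk \<phi>) \<le> (\<Sum>k. ennreal (aa * (aa*GG)^k * (\<Sum>j<n. norm (\<phi> j) ^ 2)))"
    unfolding fock_norm2_fterm by (intro suminf_le rk_fterm) auto
  also have "\<dots> = ennreal (cc * (\<Sum>j<n. norm (\<phi> j) ^ 2))" by (rule geo_sum) (simp add: sum_nonneg)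
  finally show ?thesis .
qed

lemma rk_space: "rk \<phi> \<in> fock_space n Suc"
  unfolding fock_space_def using rk_meas rk_norm2[of \<phi>]
  by (auto simp: order_le_less_trans)

lemma rk_real: "enn2real (fock_norm2 n Suc (rk \<phi>)) \<le> cc * (\<Sum>j<n. norm (\<phi> j) ^ 2)"
  using rk_norm2 cc_pos by (intro enn2real_leI) (auto intro!: mult_nonneg_nonneg sum_nonneg)

lemma reachR_kpair: "reachR n T N \<psi> P f = kpair n f (rk (\<lambda>j. P (\<psi> j)))"
  by (simp add: reachR_def kpair_def rk_def)

lemma rk_diff:
  assumes "s \<in> space (posM k)" "idx \<in> idxs (Suc k) n"
  shows "rk (\<lambda>j. \<phi>1 j - \<phi>2 j) k s idx = rk \<phi>1 k s idx - rk \<phi>2 k s idx"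
proof -
  have "bounded_linear (reach_chain T N k s (\<lambda>i. idx (Suc i)))"
    using assms by (intro reach_bl) (auto simp: space_nonneg idxs_lt dest: idxs_Suc_tail)
  thus ?thesis by (simp add: rk_def linear_diff bounded_linear.linear)
qed

lemma L_fock_eq:
  assumes f: "f \<in> fock_space n Suc"
  shows "fock_eq n (\<lambda>k. k)
     (\<lambda>k s idx. obsW T N C (reachR n T N \<psi> P f) k s idx - obsW T N C (reachR n T N \<psi> id f) k s idx)
     (obsW T N C (kpair n f (rk (\<lambda>j. P (\<psi> j) - \<psi> j))))"
proof -
  have "reachR n T N \<psi> P f - reachR n T N \<psi> id f = kpair n f (rk (\<lambda>j. P (\<psi> j) - \<psi> j))"
    unfolding reachR_kpair
    by (rule kpair_diff[OF f rk_space rk_space]) (simp add: rk_diff)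
  moreover have "C (obs_chain T N k s idx a) - C (obs_chain T N k s idx b) = C (obs_chain T N k s idx (a - b))"
    if "s \<in> space (posM k)" "idx \<in> idxs k n" for k s idx a b
    using linear_diff[OF bounded_linear.linear[OF oc_bl[OF that]], of a b] by simp
  ultimately show ?thesis by (simp add: fock_eq_def obsW_def)
qed

end


lemma fock_norm_sq_enn: "fock_norm n d f ^ 2 = enn2real (fock_norm2 n d f)"
  by (simp add: fock_norm_def)

lemma fock_norm_nonneg: "0 \<le> fock_norm n d f"
  by (simp add: fock_norm_def)

lemma partial_a:
  fixes g :: "'a::{real_inner, banach, second_countable_topology} fock"
  assumes g: "g \<in> fock_space n d" and u: "onz u MM"
  shows "(\<Sum>m<MM. fock_norm n d (inner_fock g (u m)) ^ 2) \<le> enn2real (fock_norm2 n d g)"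
proof -
  have fin: "fock_norm2 n d (inner_fock g (u m)) < top" for m
    using inner_fock_space[OF g] by (auto simp: fock_space_def)
  have "(\<Sum>m<MM. fock_norm n d (inner_fock g (u m)) ^ 2) = (\<Sum>m<MM. enn2real (fock_norm2 n d (inner_fock g (u m))))"
    by (simp add: fock_norm_sq_enn)
  also have "\<dots> = enn2real (\<Sum>m<MM. fock_norm2 n d (inner_fock g (u m)))"
    by (rule enn2real_sum[symmetric, simplified o_def]) (rule fin)
  also have "\<dots> \<le> enn2real (fock_norm2 n d g)"
    using inner_fock_bessel[OF g u] g by (intro enn2real_mono) (auto simp: fock_space_def)
  finally show ?thesis .
qed

lemma sum_kpair_sq_le:
  fixes g :: "'x::{real_inner, banach, second_countable_topology} fock"
  assumes g: "g \<in> fock_space n Suc" and fin: "finite F" and Fsp: "F \<subseteq> fock_space n Suc"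
    and one: "\<And>e. e \<in> F \<Longrightarrow> fock_inner n Suc e e = 1"
    and orth: "\<And>e e'. e \<in> F \<Longrightarrow> e' \<in> F \<Longrightarrow> e \<noteq> e' \<Longrightarrow> fock_inner n Suc e e' = 0"
  shows "(\<Sum>e\<in>F. norm (kpair n e g) ^ 2) \<le> enn2real (fock_norm2 n Suc g)"
proof -
  obtain dd :: "nat \<Rightarrow> 'x" where dense: "\<And>x e. 0 < e \<Longrightarrow> \<exists>m. norm (x - dd m) < e"
    using dense_seq_exists by blast
  define u where "u = gs dd"
  define a where "a m = inner_fock g (u m)" for m
  define G where "G = enn2real (fock_norm2 n Suc g)"
  have par: "(\<lambda>m. (inner y (u m))^2) sums (norm y ^ 2)" for y
    unfolding u_def by (rule parseval_gs(2)[OF dense])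
  have X: "inner (kpair n e g) (u m) = fock_inner n Suc e (a m)" if "e \<in> F" for e m
    unfolding a_def using Fsp that by (intro kpair_inner g) auto
  have am: "a m \<in> fock_space n Suc" for m unfolding a_def by (rule inner_fock_space[OF g])
  have partial: "(\<Sum>m<MM. fock_norm n Suc (a m) ^ 2) \<le> G" for MM
    unfolding a_def G_def u_def by (rule partial_a[OF g gs_onz])
  have summ: "summable (\<lambda>m. fock_norm n Suc (a m) ^ 2)"
  proof (rule bounded_imp_summable)
    show "\<And>m. 0 \<le> fock_norm n Suc (a m) ^ 2" by simp
    show "(\<Sum>k\<le>m. fock_norm n Suc (a k) ^ 2) \<le> G" for m
      using partial[of "Suc m"] by (simp add: lessThan_Suc_atMost)
  qed
  have bess: "(\<Sum>e\<in>F. (fock_inner n Suc e (a m))^2) \<le> fock_norm n Suc (a m) ^ 2" for m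
    by (rule fock_bessel[OF fin Fsp am one orth])
  have sF: "summable (\<lambda>m. (fock_inner n Suc e (a m))^2)" if "e \<in> F" for e
    using par[of "kpair n e g"] X[OF that] by (simp add: sums_iff)
  have "(\<Sum>e\<in>F. norm (kpair n e g) ^ 2) = (\<Sum>e\<in>F. \<Sum>m. (fock_inner n Suc e (a m))^2)"
  proof (intro sum.cong refl)
    fix e assume e: "e \<in> F"
    show "norm (kpair n e g) ^ 2 = (\<Sum>m. (fock_inner n Suc e (a m))^2)"
      using par[of "kpair n e g"] X[OF e] by (simp add: sums_iff)
  qed
  also have "\<dots> = (\<Sum>m. \<Sum>e\<in>F. (fock_inner n Suc e (a m))^2)"
    by (rule suminf_sum[symmetric]) (rule sF)
  also have "\<dots> \<le> (\<Sum>m. fock_norm n Suc (a m) ^ 2)"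
    by (intro suminf_le bess summ summable_sum sF)
  also have "\<dots> \<le> G" by (intro suminf_le_const summ partial)
  finally show ?thesis unfolding G_def .
qed

context sgfull
begin

lemma hs_bound:
  fixes L :: "real fock \<Rightarrow> 'h fock"
  assumes g: "g \<in> fock_space n Suc"
    and Leq: "\<And>f. f \<in> fock_space n Suc \<Longrightarrow> fock_eq n (\<lambda>k. k) (L f) (obsW T N C (kpair n f g))"
  shows "hs_norm2 n Suc (\<lambda>k. k) L \<le> ennreal (cW * enn2real (fock_norm2 n Suc g))"
  unfolding hs_norm2_def
proof (rule SUP_least)
  fix E :: "real fock set" assume "E \<in> {E. fock_orthonormal n Suc E}"
  hence Esp: "E \<subseteq> fock_space n Suc" and one: "\<And>e. e \<in> E \<Longrightarrow> fock_inner n Suc e e = 1"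
    and orth: "\<And>e e'. e \<in> E \<Longrightarrow> e' \<in> E \<Longrightarrow> e \<noteq> e' \<Longrightarrow> fock_inner n Suc e e' = 0"
    by (auto simp: fock_orthonormal_def)
  show "(\<Sum>\<^sub>\<infinity>e\<in>E. ennreal ((fock_norm n (\<lambda>k. k) (L e))\<^sup>2)) \<le> ennreal (cW * enn2real (fock_norm2 n Suc g))"
  proof (rule infsum_le_finite_sums)
    show "(\<lambda>e. ennreal ((fock_norm n (\<lambda>k. k) (L e))\<^sup>2)) summable_on E"
      by (rule nonneg_summable_on_complete) simp
    fix F assume fin: "finite F" and FE: "F \<subseteq> E"
    have each: "fock_norm n (\<lambda>k. k) (L e) ^ 2 \<le> cW * norm (kpair n e g) ^ 2" if e: "e \<in> F" for e
    proof -
      have "fock_norm n (\<lambda>k. k) (L e) = fock_norm n (\<lambda>k. k) (obsW T N C (kpair n e g))"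
        using e FE Esp by (intro fock_norm_cong Leq) auto
      also have "\<dots> \<le> sqrt cW * norm (kpair n e g)" by (rule obsW_norm)
      finally have "fock_norm n (\<lambda>k. k) (L e) ^ 2 \<le> (sqrt cW * norm (kpair n e g)) ^ 2"
        by (intro power_mono fock_norm_nonneg)
      thus ?thesis using cW_nonneg by (simp add: power_mult_distrib)
    qed
    have "(\<Sum>e\<in>F. ennreal ((fock_norm n (\<lambda>k. k) (L e))\<^sup>2)) = ennreal (\<Sum>e\<in>F. (fock_norm n (\<lambda>k. k) (L e))\<^sup>2)"
      by (rule sum_ennreal) simp
    also have "\<dots> \<le> ennreal (\<Sum>e\<in>F. cW * norm (kpair n e g) ^ 2)"
      by (intro ennreal_leI sum_mono each)
    also have "(\<Sum>e\<in>F. cW * norm (kpair n e g) ^ 2) = cW * (\<Sum>e\<in>F. norm (kpair n e g) ^ 2)"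
      by (simp add: sum_distrib_left)
    also have "\<dots> \<le> cW * enn2real (fock_norm2 n Suc g)"
    proof (intro mult_left_mono sum_kpair_sq_le[OF g fin] cW_nonneg)
      show "F \<subseteq> fock_space n Suc" using FE Esp by blast
      show "\<And>e. e \<in> F \<Longrightarrow> fock_inner n Suc e e = 1" using FE one by blast
      show "\<And>e e'. e \<in> F \<Longrightarrow> e' \<in> F \<Longrightarrow> e \<noteq> e' \<Longrightarrow> fock_inner n Suc e e' = 0" using FE orth by blast
    qed
    finally show "(\<Sum>e\<in>F. ennreal ((fock_norm n (\<lambda>k. k) (L e))\<^sup>2)) \<le> ennreal (cW * enn2real (fock_norm2 n Suc g))"
      by (simp add: ennreal_leI)
  qed
qed

lemma partial_b:
  assumes S: "(SUP E\<in>{E. orthonormal_set E}. (\<Sum>\<^sub>\<infinity>e\<in>E. ennreal ((fock_norm n (\<lambda>k. k) (obsW T N C e))\<^sup>2))) \<le> ennreal Sr"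
    and Sr: "0 \<le> Sr" and u: "\<And>MM. onz u MM"
  shows "(\<Sum>m<MM. fock_norm n (\<lambda>k. k) (obsW T N C (u m)) ^ 2) \<le> Sr"
proof -
  define I where "I = {m\<in>{..<MM}. u m \<noteq> 0}"
  have inn: "inner (u i) (u j) = (if i = j \<and> u i \<noteq> 0 then 1 else 0)" for i j
    using u[of "Suc (max i j)"] unfolding onz_def by (meson less_Suc_eq_le max.cobounded1 max.cobounded2)
  have inj: "inj_on u I"
  proof (rule inj_onI)
    fix i j assume "i \<in> I" "j \<in> I" "u i = u j"
    thus "i = j" using inn[of i j] inn[of i i] by (auto simp: I_def split: if_splits)
  qed
  have ortho: "orthonormal_set (u ` I)"
    unfolding orthonormal_set_def
  proof (intro conjI ballI impI)
    fix e assume "e \<in> u ` I"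
    then obtain i where "i \<in> I" "e = u i" by blast
    thus "norm e = 1" using inn[of i i] by (simp add: I_def norm_eq_sqrt_inner)
  next
    fix e e' assume "e \<in> u ` I" "e' \<in> u ` I" "e \<noteq> e'"
    then obtain i j where "e = u i" "e' = u j" "i \<noteq> j" by blast
    thus "inner e e' = 0" using inn[of i j] by simp
  qed
  have "(\<Sum>m<MM. fock_norm n (\<lambda>k. k) (obsW T N C (u m)) ^ 2) = (\<Sum>m\<in>I. fock_norm n (\<lambda>k. k) (obsW T N C (u m)) ^ 2)"
    by (rule sum.mono_neutral_right) (auto simp: I_def obsW_zero)
  also have "\<dots> = (\<Sum>e\<in>u ` I. fock_norm n (\<lambda>k. k) (obsW T N C e) ^ 2)"
    by (rule sum.reindex[OF inj, symmetric, simplified o_def])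
  finally have eq: "(\<Sum>m<MM. fock_norm n (\<lambda>k. k) (obsW T N C (u m)) ^ 2) = (\<Sum>e\<in>u ` I. fock_norm n (\<lambda>k. k) (obsW T N C e) ^ 2)" .
  have finI: "finite (u ` I)" by (simp add: I_def)
  have "ennreal (\<Sum>e\<in>u ` I. fock_norm n (\<lambda>k. k) (obsW T N C e) ^ 2) = (\<Sum>\<^sub>\<infinity>e\<in>u ` I. ennreal ((fock_norm n (\<lambda>k. k) (obsW T N C e))\<^sup>2))"
    using finI by (simp add: sum_ennreal)
  also have "\<dots> \<le> (SUP E\<in>{E. orthonormal_set E}. (\<Sum>\<^sub>\<infinity>e\<in>E. ennreal ((fock_norm n (\<lambda>k. k) (obsW T N C e))\<^sup>2)))"
    using ortho by (intro SUP_upper) simp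
  also have "\<dots> \<le> ennreal Sr" by (rule S)
  finally show ?thesis using eq Sr by simp
qed

lemma nuc_bound:
  fixes L :: "real fock \<Rightarrow> 'h fock"
  assumes g: "g \<in> fock_space n Suc"
    and Leq: "\<And>f. f \<in> fock_space n Suc \<Longrightarrow> fock_eq n (\<lambda>k. k) (L f) (obsW T N C (kpair n f g))"
    and S: "(SUP E\<in>{E. orthonormal_set E}. (\<Sum>\<^sub>\<infinity>e\<in>E. ennreal ((fock_norm n (\<lambda>k. k) (obsW T N C e))\<^sup>2))) \<le> ennreal Sr"
    and Sr: "0 \<le> Sr"
  shows "nuclear_norm n Suc (\<lambda>k. k) L \<le> ennreal (sqrt (enn2real (fock_norm2 n Suc g)) * sqrt Sr)"
proof -
  obtain dd :: "nat \<Rightarrow> 'x" where dense: "\<And>x e. 0 < e \<Longrightarrow> \<exists>m. norm (x - dd m) < e"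
    using dense_seq_exists by blast
  define u where "u = gs dd"
  define a where "a m = inner_fock g (u m)" for m
  define b where "b m = obsW T N C (u m)" for m
  define G where "G = enn2real (fock_norm2 n Suc g)"
  have asp: "a m \<in> fock_space n Suc" for m unfolding a_def by (rule inner_fock_space[OF g])
  have bsp: "b m \<in> fock_space n (\<lambda>k. k)" for m unfolding b_def by (rule obsW_space)
  have conv: "(\<lambda>MM. fock_norm n (\<lambda>k. k) (\<lambda>k s idx. L z k s idx - (\<Sum>i<MM. fock_inner n Suc z (a i) *\<^sub>R b i k s idx))) \<longlonglongrightarrow> 0"
    if z: "z \<in> fock_space n Suc" for z
  proof -
    define y where "y = kpair n z g"
    define Q where "Q MM = (\<Sum>i<MM. inner y (u i) *\<^sub>R u i)" for MM
    have ci: "fock_inner n Suc z (a i) = inner y (u i)" for i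
      unfolding a_def y_def by (rule kpair_inner[OF z g, symmetric])
    have eq: "fock_norm n (\<lambda>k. k) (\<lambda>k s idx. L z k s idx - (\<Sum>i<MM. fock_inner n Suc z (a i) *\<^sub>R b i k s idx))
        = fock_norm n (\<lambda>k. k) (obsW T N C (y - Q MM))" for MM
    proof (rule fock_norm_cong)
      have Lz: "fock_eq n (\<lambda>k. k) (L z) (obsW T N C y)" unfolding y_def by (rule Leq[OF z])
      show "fock_eq n (\<lambda>k. k) (\<lambda>k s idx. L z k s idx - (\<Sum>i<MM. fock_inner n Suc z (a i) *\<^sub>R b i k s idx)) (obsW T N C (y - Q MM))"
        unfolding fock_eq_def
      proof (intro allI ballI)
        fix k idx s assume idx: "idx \<in> idxs k n" and s: "s \<in> space (posM k)"
        interpret bl: bounded_linear "\<lambda>x. C (obs_chain T N k s idx x)" by (rule oc_bl[OF s idx])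
        have "L z k s idx = C (obs_chain T N k s idx y)" using Lz idx s by (auto simp: fock_eq_def obsW_def)
        moreover have "C (obs_chain T N k s idx (y - Q MM)) = C (obs_chain T N k s idx y) - (\<Sum>i<MM. inner y (u i) *\<^sub>R C (obs_chain T N k s idx (u i)))"
          unfolding Q_def by (simp add: bl.diff bl.sum bl.scaleR)
        ultimately show "L z k s idx - (\<Sum>i<MM. fock_inner n Suc z (a i) *\<^sub>R b i k s idx) = obsW T N C (y - Q MM) k s idx"
          by (simp add: ci b_def obsW_def)
      qed
    qed
    have "Q \<longlonglongrightarrow> y" unfolding Q_def u_def by (rule parseval_gs(1)[OF dense])
    hence "(\<lambda>MM. y - Q MM) \<longlonglongrightarrow> y - y" by (intro tendsto_intros)
    hence "(\<lambda>MM. y - Q MM) \<longlonglongrightarrow> 0" by simp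
    hence "(\<lambda>MM. norm (y - Q MM)) \<longlonglongrightarrow> 0" by (rule tendsto_norm_zero)
    hence up: "(\<lambda>MM. sqrt cW * norm (y - Q MM)) \<longlonglongrightarrow> sqrt cW * 0" by (intro tendsto_intros)
    show ?thesis unfolding eq
    proof (rule tendsto_sandwich[OF _ _ tendsto_const up[simplified]])
      show "\<forall>\<^sub>F MM in sequentially. 0 \<le> fock_norm n (\<lambda>k. k) (obsW T N C (y - Q MM))" by (simp add: fock_norm_nonneg)
      show "\<forall>\<^sub>F MM in sequentially. fock_norm n (\<lambda>k. k) (obsW T N C (y - Q MM)) \<le> sqrt cW * norm (y - Q MM)"
        by (simp add: obsW_norm)
    qed
  qed
  have pa: "(\<Sum>m<MM. fock_norm n Suc (a m) ^ 2) \<le> G" for MM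
    unfolding a_def G_def u_def by (rule partial_a[OF g gs_onz])
  have pb: "(\<Sum>m<MM. fock_norm n (\<lambda>k. k) (b m) ^ 2) \<le> Sr" for MM
    unfolding b_def u_def by (rule partial_b[OF S Sr gs_onz])
  have G0: "0 \<le> G" by (simp add: G_def)
  have sumle: "(\<Sum>i. ennreal (fock_norm n Suc (a i) * fock_norm n (\<lambda>k. k) (b i))) \<le> ennreal (sqrt G * sqrt Sr)"
    unfolding suminf_eq_SUP
  proof (rule SUP_least)
    fix MM :: nat
    define fa where "fa i = fock_norm n Suc (a i)" for i
    define fb where "fb i = fock_norm n (\<lambda>k. k) (b i)" for i
    have fa0: "0 \<le> fa i" for i by (simp add: fa_def fock_norm_nonneg)
    have fb0: "0 \<le> fb i" for i by (simp add: fb_def fock_norm_nonneg)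
    have s1: "(\<Sum>i<MM. ennreal (fa i * fb i)) = ennreal (\<Sum>i<MM. fa i * fb i)"
      by (rule sum_ennreal) (intro mult_nonneg_nonneg fa0 fb0)
    have "(\<Sum>i<MM. fa i * fb i) = (\<Sum>i<MM. \<bar>fa i\<bar> * \<bar>fb i\<bar>)"
      by (intro sum.cong refl) (simp only: abs_of_nonneg[OF fa0] abs_of_nonneg[OF fb0])
    also have "\<dots> \<le> L2_set fa {..<MM} * L2_set fb {..<MM}" by (rule L2_set_mult_ineq)
    also have "\<dots> \<le> sqrt G * sqrt Sr"
    proof (rule mult_mono)
      show "L2_set fa {..<MM} \<le> sqrt G" unfolding L2_set_def
        by (rule real_sqrt_le_mono) (use pa[of MM] in \<open>simp only: fa_def\<close>)
      show "L2_set fb {..<MM} \<le> sqrt Sr" unfolding L2_set_def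
        by (rule real_sqrt_le_mono) (use pb[of MM] in \<open>simp only: fb_def\<close>)
      show "0 \<le> sqrt G" using G0 by (rule real_sqrt_ge_zero)
      show "0 \<le> L2_set fb {..<MM}" by (rule L2_set_nonneg)
    qed
    finally have "(\<Sum>i<MM. fa i * fb i) \<le> sqrt G * sqrt Sr" .
    hence "ennreal (\<Sum>i<MM. fa i * fb i) \<le> ennreal (sqrt G * sqrt Sr)" by (rule ennreal_leI)
    thus "(\<Sum>i<MM. ennreal (fock_norm n Suc (a i) * fock_norm n (\<lambda>k. k) (b i))) \<le> ennreal (sqrt G * sqrt Sr)"
      using s1 by (simp only: fa_def fb_def)
  qed
  have mem: "(\<Sum>i. ennreal (fock_norm n Suc (a i) * fock_norm n (\<lambda>k. k) (b i))) \<in>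
      {(\<Sum>i. ennreal (fock_norm n Suc (a i) * fock_norm n (\<lambda>k. k) (b i))) | a b.
      (\<forall>i. a i \<in> fock_space n Suc \<and> b i \<in> fock_space n (\<lambda>k. k)) \<and>
      (\<forall>z\<in>fock_space n Suc. (\<lambda>m. fock_norm n (\<lambda>k. k)
          (\<lambda>k s idx. L z k s idx - (\<Sum>i<m. fock_inner n Suc z (a i) *\<^sub>R b i k s idx))) \<longlonglongrightarrow> 0)}"
    unfolding mem_Collect_eq
    by (intro exI[of _ a] exI[of _ b] conjI refl allI ballI asp bsp conv)
  have "nuclear_norm n Suc (\<lambda>k. k) L \<le> (\<Sum>i. ennreal (fock_norm n Suc (a i) * fock_norm n (\<lambda>k. k) (b i)))"
    unfolding nuclear_norm_def by (rule Inf_lower[OF mem])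
  also note sumle
  finally show ?thesis by (simp add: G_def)
qed

end


theorem proposition1p2:
  fixes T :: "real \<Rightarrow> 'x::{real_inner, banach, second_countable_topology} \<Rightarrow> 'x"
    and n :: nat
    and N :: "nat \<Rightarrow> 'x \<Rightarrow> 'x"
    and \<psi> :: "nat \<Rightarrow> 'x"
    and C :: "'x \<Rightarrow> 'h::{real_inner, banach, second_countable_topology}"
    and M \<nu> :: real
    and V :: "nat \<Rightarrow> 'x set"
  assumes T_lin: "\<forall>t\<ge>0. bounded_linear (T t)"
    and T_0: "T 0 = id"
    and T_semigroup: "\<forall>s\<ge>0. \<forall>t\<ge>0. T (s + t) = T s \<circ> T t"
    and T_strong: "\<forall>x. ((\<lambda>t. T t x) \<longlongrightarrow> x) (at_right 0)"
    and M_ge: "M \<ge> 1" and nu_pos: "\<nu> > 0"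
    and T_bound: "\<forall>t\<ge>0. onorm (T t) \<le> M * exp (- \<nu> * t)"
    and N_lin: "\<forall>i<n. bounded_linear (N i)"
    and C_lin: "bounded_linear C"
    and small: "M\<^sup>2 * (sqrt (\<Sum>i<n. onorm (N i \<circ> adj (N i))))\<^sup>2 / (2 * \<nu>) < 1"
    and V_sub: "\<forall>i. subspace (V i) \<and> closed (V i)"
    and V_mono: "\<forall>i. V i \<subseteq> V (Suc i)"
    and V_dense: "closure (\<Union>i. V i) = UNIV"
    and V_T_inv: "\<forall>i. \<forall>t\<ge>0. T t ` V i \<subseteq> V i"
    and V_N_inv: "\<forall>i. \<forall>j<n. N j ` V i \<subseteq> V i"
  shows "((SUP E\<in>{E. orthonormal_set E}. (\<Sum>\<^sub>\<infinity>e\<in>E. ennreal ((fock_norm n (\<lambda>k. k) (obsW T N C e))\<^sup>2))) < \<infinity>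
          \<longrightarrow> (\<lambda>i. nuclear_norm n Suc (\<lambda>k. k)
                 (\<lambda>f k s idx. obsW T N C (reachR n T N \<psi> (orth_proj (V i)) f) k s idx
                              - obsW T N C (reachR n T N \<psi> id f) k s idx)) \<longlonglongrightarrow> 0)
       \<and> (((\<forall>x. obsW T N C x \<in> fock_space n (\<lambda>k. k)) \<and>
           (\<exists>K. \<forall>x. fock_norm n (\<lambda>k. k) (obsW T N C x) \<le> K * norm x))
          \<longrightarrow> (\<lambda>i. hs_norm2 n Suc (\<lambda>k. k)
                 (\<lambda>f k s idx. obsW T N C (reachR n T N \<psi> (orth_proj (V i)) f) k s idx
                              - obsW T N C (reachR n T N \<psi> id f) k s idx)) \<longlonglongrightarrow> 0)"
proof -
  interpret sgfull T N n M \<nu> C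
    unfolding sgfull_def sgsys2_def sgsys_def sgfull_axioms_def sgsys2_axioms_def
    using T_lin T_0 T_semigroup T_strong M_ge nu_pos T_bound N_lin C_lin small by blast
  define \<delta> where "\<delta> i j = orth_proj (V i) (\<psi> j) - \<psi> j" for i j
  define g where "g i = rk (\<delta> i)" for i
  define L where "L i = (\<lambda>f k s idx. obsW T N C (reachR n T N \<psi> (orth_proj (V i)) f) k s idx
                              - obsW T N C (reachR n T N \<psi> id f) k s idx)" for i
  have gsp: "g i \<in> fock_space n Suc" for i unfolding g_def by (rule rk_space)
  have Leq: "fock_eq n (\<lambda>k. k) (L i f) (obsW T N C (kpair n f (g i)))" if "f \<in> fock_space n Suc" for i f
    unfolding L_def g_def \<delta>_def by (rule L_fock_eq[OF that])
  define B where "B i = cc * (\<Sum>j<n. norm (\<delta> i j) ^ 2)" for i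
  have Gb: "enn2real (fock_norm2 n Suc (g i)) \<le> B i" for i unfolding g_def B_def by (rule rk_real)
  have B0: "0 \<le> B i" for i using cc_pos by (simp add: B_def sum_nonneg)
  have dj: "(\<lambda>i. \<delta> i j) \<longlonglongrightarrow> 0" for j
  proof -
    have "(\<lambda>i. orth_proj (V i) (\<psi> j)) \<longlonglongrightarrow> \<psi> j" by (rule orth_proj_tendsto[OF V_sub V_mono V_dense])
    thus ?thesis unfolding \<delta>_def by (rule LIM_zero)
  qed
  have Bc: "B \<longlonglongrightarrow> 0"
  proof -
    have "(\<lambda>i. cc * (\<Sum>j<n. norm (\<delta> i j) ^ 2)) \<longlonglongrightarrow> cc * (\<Sum>j<n. norm (0::'x) ^ 2)"
      by (intro tendsto_intros dj)
    moreover have "B = (\<lambda>i. cc * (\<Sum>j<n. norm (\<delta> i j) ^ 2))" by (simp add: B_def fun_eq_iff)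
    ultimately show ?thesis by simp
  qed
  show ?thesis
  proof (intro conjI impI)
    let ?S = "(SUP E\<in>{E. orthonormal_set E}. (\<Sum>\<^sub>\<infinity>e\<in>E. ennreal ((fock_norm n (\<lambda>k. k) (obsW T N C e))\<^sup>2)))"
    assume HS: "?S < \<infinity>"
    define Sr where "Sr = enn2real ?S"
    have S: "?S \<le> ennreal Sr" using HS by (simp add: Sr_def)
    have Sr0: "0 \<le> Sr" by (simp add: Sr_def)
    have nb: "nuclear_norm n Suc (\<lambda>k. k) (L i) \<le> ennreal (sqrt (B i) * sqrt Sr)" for i
    proof -
      have "nuclear_norm n Suc (\<lambda>k. k) (L i) \<le> ennreal (sqrt (enn2real (fock_norm2 n Suc (g i))) * sqrt Sr)"
        by (rule nuc_bound[OF gsp Leq S Sr0])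
      also have "\<dots> \<le> ennreal (sqrt (B i) * sqrt Sr)"
        using Gb[of i] Sr0 by (intro ennreal_leI mult_right_mono real_sqrt_le_mono) auto
      finally show ?thesis .
    qed
    have up: "(\<lambda>i. ennreal (sqrt (B i) * sqrt Sr)) \<longlonglongrightarrow> ennreal (sqrt 0 * sqrt Sr)"
      by (intro tendsto_intros Bc)
    have "(\<lambda>i. nuclear_norm n Suc (\<lambda>k. k) (L i)) \<longlonglongrightarrow> 0"
    proof (rule tendsto_sandwich[OF _ _ tendsto_const up[simplified]])
      show "\<forall>\<^sub>F i in sequentially. 0 \<le> nuclear_norm n Suc (\<lambda>k. k) (L i)" by simp
      show "\<forall>\<^sub>F i in sequentially. nuclear_norm n Suc (\<lambda>k. k) (L i) \<le> ennreal (sqrt (B i) * sqrt Sr)"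
        using nb by simp
    qed
    thus "(\<lambda>i. nuclear_norm n Suc (\<lambda>k. k)
                 (\<lambda>f k s idx. obsW T N C (reachR n T N \<psi> (orth_proj (V i)) f) k s idx
                              - obsW T N C (reachR n T N \<psi> id f) k s idx)) \<longlonglongrightarrow> 0"
      by (simp only: L_def)
  next
    have hb: "hs_norm2 n Suc (\<lambda>k. k) (L i) \<le> ennreal (cW * B i)" for i
    proof -
      have "hs_norm2 n Suc (\<lambda>k. k) (L i) \<le> ennreal (cW * enn2real (fock_norm2 n Suc (g i)))"
        by (rule hs_bound[OF gsp Leq])
      also have "\<dots> \<le> ennreal (cW * B i)"
        using Gb[of i] cW_nonneg by (intro ennreal_leI mult_left_mono) auto
      finally show ?thesis .
    qed
    have up: "(\<lambda>i. ennreal (cW * B i)) \<longlonglongrightarrow> ennreal (cW * 0)"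
      by (intro tendsto_intros Bc)
    have "(\<lambda>i. hs_norm2 n Suc (\<lambda>k. k) (L i)) \<longlonglongrightarrow> 0"
    proof (rule tendsto_sandwich[OF _ _ tendsto_const up[simplified]])
      show "\<forall>\<^sub>F i in sequentially. 0 \<le> hs_norm2 n Suc (\<lambda>k. k) (L i)" by simp
      show "\<forall>\<^sub>F i in sequentially. hs_norm2 n Suc (\<lambda>k. k) (L i) \<le> ennreal (cW * B i)"
        using hb by simp
    qed
    thus "(\<lambda>i. hs_norm2 n Suc (\<lambda>k. k)
                 (\<lambda>f k s idx. obsW T N C (reachR n T N \<psi> (orth_proj (V i)) f) k s idx
                              - obsW T N C (reachR n T N \<psi> id f) k s idx)) \<longlonglongrightarrow> 0"
      by (simp only: L_def)
  qed
qed

end
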